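(* Let $S,T$ be totally ordered sets and $M\colon S\times T\to\mathbf{Vec}$ pointwise finite-dimensional and indecomposable, such that for all $x\le x'$ in $S$, $y\le y'$ in $T$ the sequence $0\to M_{(x,y)}\to M_{(x,y')}\oplus M_{(x',y)}\to M_{(x',y')}\to0$ (maps $(M((x,y)\le(x,y')),M((x,y)\le(x',y)))$ and the difference of the two maps into $M_{(x',y')}$) is exact. If $\operatorname{Im}M^{\leftarrow}\cap\ker M^{\rightarrow}\neq0$ or $\operatorname{Im}M^{\downarrow}\cap\ker M^{\uparrow}\neq0$, then $M\cong k_B$ for a block $B$ of type db.
   Context: For $(p_1,p_2)\in S\times T$: $\operatorname{Im}M^{\leftarrow}_{(p_1,p_2)}=\bigcap_{q\le p_1}\operatorname{Im}M((q,p_2)\le(p_1,p_2))$, $\operatorname{Im}M^{\downarrow}_{(p_1,p_2)}=\bigcap_{q\le p_2}\operatorname{Im}M((p_1,q)\le(p_1,p_2))$, $\ker M^{\rightarrow}_{(p_1,p_2)}=\bigcup_{q\ge p_1}\ker M((p_1,p_2)\le(q,p_2))$, $\ker M^{\uparrow}_{(p_1,p_2)}=\bigcup_{q\ge p_2}\ker M((p_1,p_2)\le(p_1,q))$ (submodules of $M$). A block of type db is $J_S\times J_T$ with $J_S\subseteq S$, $J_T\subseteq T$ non-empty downward-closed. $k_B$ is $k$ on $B$, $0$ elsewhere, identity maps within $B$, zero otherwise. *)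

theory Defs
  imports Complex_Main
begin

text \<open>A module is given by an ambient k-vector space
type 'v (with scalar multiplication scale), a family of subspaces V p (the spaces M_p) and
structure maps f p q : M_p \<rightarrow> M_q for p \<le> q.\<close>

definition pleq :: "'s::linorder \<times> 't::linorder \<Rightarrow> 's \<times> 't \<Rightarrow> bool" where
  "pleq p q \<longleftrightarrow> fst p \<le> fst q \<and> snd p \<le> snd q"

definition lin_on :: "('k::field \<Rightarrow> 'v::ab_group_add \<Rightarrow> 'v) \<Rightarrow> ('k \<Rightarrow> 'w::ab_group_add \<Rightarrow> 'w)
    \<Rightarrow> 'v set \<Rightarrow> ('v \<Rightarrow> 'w) \<Rightarrow> bool" where
  "lin_on sc1 sc2 A g \<longleftrightarrow> (\<forall>x\<in>A. \<forall>y\<in>A. g (x + y) = g x + g y) \<and> (\<forall>c. \<forall>x\<in>A. g (sc1 c x) = sc2 c (g x))"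

definition pmod :: "('k::field \<Rightarrow> 'v::ab_group_add \<Rightarrow> 'v) \<Rightarrow> ('s::linorder \<times> 't::linorder \<Rightarrow> 'v set)
    \<Rightarrow> ('s \<times> 't \<Rightarrow> 's \<times> 't \<Rightarrow> 'v \<Rightarrow> 'v) \<Rightarrow> bool" where
  "pmod sc V f \<longleftrightarrow> vector_space sc \<and> (\<forall>p. module.subspace sc (V p)) \<and>
     (\<forall>p q. pleq p q \<longrightarrow> f p q ` V p \<subseteq> V q \<and> lin_on sc sc (V p) (f p q)) \<and>
     (\<forall>p. \<forall>v\<in>V p. f p p v = v) \<and>
     (\<forall>p q r. pleq p q \<longrightarrow> pleq q r \<longrightarrow> (\<forall>v\<in>V p. f q r (f p q v) = f p r v))"

definition pfd :: "('k::field \<Rightarrow> 'v::ab_group_add \<Rightarrow> 'v) \<Rightarrow> ('s::linorder \<times> 't::linorder \<Rightarrow> 'v set) \<Rightarrow> bool" where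
  "pfd sc V \<longleftrightarrow> (\<forall>p. \<exists>B. finite B \<and> B \<subseteq> V p \<and> module.span sc B = V p)"

definition submod :: "('k::field \<Rightarrow> 'v::ab_group_add \<Rightarrow> 'v) \<Rightarrow> ('s::linorder \<times> 't::linorder \<Rightarrow> 'v set)
    \<Rightarrow> ('s \<times> 't \<Rightarrow> 's \<times> 't \<Rightarrow> 'v \<Rightarrow> 'v) \<Rightarrow> ('s \<times> 't \<Rightarrow> 'v set) \<Rightarrow> bool" where
  "submod sc V f N \<longleftrightarrow> (\<forall>p. N p \<subseteq> V p \<and> module.subspace sc (N p)) \<and>
     (\<forall>p q. pleq p q \<longrightarrow> f p q ` N p \<subseteq> N q)"

definition nonzero_mod :: "('s \<times> 't \<Rightarrow> 'v::zero set) \<Rightarrow> bool" where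
  "nonzero_mod N \<longleftrightarrow> (\<exists>p. N p \<noteq> {0})"

definition indecomposable :: "('k::field \<Rightarrow> 'v::ab_group_add \<Rightarrow> 'v) \<Rightarrow> ('s::linorder \<times> 't::linorder \<Rightarrow> 'v set)
    \<Rightarrow> ('s \<times> 't \<Rightarrow> 's \<times> 't \<Rightarrow> 'v \<Rightarrow> 'v) \<Rightarrow> bool" where
  "indecomposable sc V f \<longleftrightarrow> nonzero_mod V \<and>
     (\<forall>N1 N2. submod sc V f N1 \<and> submod sc V f N2 \<and>
        (\<forall>p. N1 p \<inter> N2 p = {0} \<and> (\<forall>v\<in>V p. \<exists>a\<in>N1 p. \<exists>b\<in>N2 p. v = a + b))
        \<longrightarrow> \<not> nonzero_mod N1 \<or> \<not> nonzero_mod N2)"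

text \<open>Exactness of 0 \<rightarrow> M(x,y) \<rightarrow> M(x,y') \<oplus> M(x',y) \<rightarrow> M(x',y') \<rightarrow> 0, first map
v \<mapsto> (M((x,y)\<le>(x,y')) v, M((x,y)\<le>(x',y)) v), second map
(a,b) \<mapsto> M((x,y')\<le>(x',y')) a - M((x',y)\<le>(x',y')) b.\<close>
definition square_exact :: "('s \<times> 't \<Rightarrow> 'v::ab_group_add set) \<Rightarrow> ('s \<times> 't \<Rightarrow> 's \<times> 't \<Rightarrow> 'v \<Rightarrow> 'v)
    \<Rightarrow> 's \<Rightarrow> 's \<Rightarrow> 't \<Rightarrow> 't \<Rightarrow> bool" where
  "square_exact V f x x' y y' \<longleftrightarrow>
     (let \<alpha> = f (x,y) (x,y'); \<beta> = f (x,y) (x',y); \<gamma> = f (x,y') (x',y'); \<delta> = f (x',y) (x',y') in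
       (\<forall>v\<in>V (x,y). \<alpha> v = 0 \<and> \<beta> v = 0 \<longrightarrow> v = 0) \<and>
       (\<forall>a\<in>V (x,y'). \<forall>b\<in>V (x',y). \<gamma> a - \<delta> b = 0 \<longleftrightarrow> (\<exists>v\<in>V (x,y). a = \<alpha> v \<and> b = \<beta> v)) \<and>
       (\<forall>w\<in>V (x',y'). \<exists>a\<in>V (x,y'). \<exists>b\<in>V (x',y). w = \<gamma> a - \<delta> b))"

definition im_left :: "('s::linorder \<times> 't::linorder \<Rightarrow> 'v set) \<Rightarrow> ('s \<times> 't \<Rightarrow> 's \<times> 't \<Rightarrow> 'v \<Rightarrow> 'v)
    \<Rightarrow> 's \<times> 't \<Rightarrow> 'v set" where
  "im_left V f p = (\<Inter>q\<in>{q. q \<le> fst p}. f (q, snd p) p ` V (q, snd p))"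

definition im_down :: "('s::linorder \<times> 't::linorder \<Rightarrow> 'v set) \<Rightarrow> ('s \<times> 't \<Rightarrow> 's \<times> 't \<Rightarrow> 'v \<Rightarrow> 'v)
    \<Rightarrow> 's \<times> 't \<Rightarrow> 'v set" where
  "im_down V f p = (\<Inter>q\<in>{q. q \<le> snd p}. f (fst p, q) p ` V (fst p, q))"

definition ker_right :: "('s::linorder \<times> 't::linorder \<Rightarrow> 'v::zero set) \<Rightarrow> ('s \<times> 't \<Rightarrow> 's \<times> 't \<Rightarrow> 'v \<Rightarrow> 'v)
    \<Rightarrow> 's \<times> 't \<Rightarrow> 'v set" where
  "ker_right V f p = (\<Union>q\<in>{q. fst p \<le> q}. {v\<in>V p. f p (q, snd p) v = 0})"

definition ker_up :: "('s::linorder \<times> 't::linorder \<Rightarrow> 'v::zero set) \<Rightarrow> ('s \<times> 't \<Rightarrow> 's \<times> 't \<Rightarrow> 'v \<Rightarrow> 'v)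
    \<Rightarrow> 's \<times> 't \<Rightarrow> 'v set" where
  "ker_up V f p = (\<Union>q\<in>{q. snd p \<le> q}. {v\<in>V p. f p (fst p, q) v = 0})"

text \<open>Downward-closed non-empty subsets; blocks of type db; the interval module k_B
(realised with ambient space 'k itself).\<close>
definition down_closed :: "'a::order set \<Rightarrow> bool" where
  "down_closed J \<longleftrightarrow> J \<noteq> {} \<and> (\<forall>a\<in>J. \<forall>b. b \<le> a \<longrightarrow> b \<in> J)"

definition db_block :: "('s::linorder \<times> 't::linorder) set \<Rightarrow> bool" where
  "db_block B \<longleftrightarrow> (\<exists>JS JT. down_closed JS \<and> down_closed JT \<and> B = JS \<times> JT)"

definition kB_space :: "('s \<times> 't) set \<Rightarrow> 's \<times> 't \<Rightarrow> 'k::field set" where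
  "kB_space B p = (if p \<in> B then UNIV else {0})"

definition kB_map :: "('s \<times> 't) set \<Rightarrow> 's \<times> 't \<Rightarrow> 's \<times> 't \<Rightarrow> 'k::field \<Rightarrow> 'k" where
  "kB_map B p q = (if p \<in> B \<and> q \<in> B then id else (\<lambda>_. 0))"

definition pmod_iso :: "('k::field \<Rightarrow> 'v::ab_group_add \<Rightarrow> 'v) \<Rightarrow> ('s::linorder \<times> 't::linorder \<Rightarrow> 'v set)
    \<Rightarrow> ('s \<times> 't \<Rightarrow> 's \<times> 't \<Rightarrow> 'v \<Rightarrow> 'v)
    \<Rightarrow> ('k \<Rightarrow> 'w::ab_group_add \<Rightarrow> 'w) \<Rightarrow> ('s \<times> 't \<Rightarrow> 'w set) \<Rightarrow> ('s \<times> 't \<Rightarrow> 's \<times> 't \<Rightarrow> 'w \<Rightarrow> 'w) \<Rightarrow> bool" where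
  "pmod_iso sc V f sc' W g \<longleftrightarrow> (\<exists>\<phi>. (\<forall>p. bij_betw (\<phi> p) (V p) (W p) \<and> lin_on sc sc' (V p) (\<phi> p)) \<and>
     (\<forall>p q. pleq p q \<longrightarrow> (\<forall>v\<in>V p. \<phi> q (f p q v) = g p q (\<phi> p v))))"

end

theory Submission
  imports Defs
begin


lemma min_fam:
  fixes m :: "'a set \<Rightarrow> nat"
  assumes "F \<noteq> {}" "\<And>A B. A \<in> F \<Longrightarrow> B \<in> F \<Longrightarrow> B \<subset> A \<Longrightarrow> m B < m A"
  shows "\<exists>A\<in>F. \<forall>B\<in>F. B \<subseteq> A \<longrightarrow> B = A"
proof -
  obtain A0 where A0: "A0 \<in> F" using assms(1) by blast
  obtain A where A: "A \<in> F" "\<forall>B. B \<in> F \<longrightarrow> m A \<le> m B"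
    using ex_has_least_nat[of "\<lambda>A. A \<in> F" A0 m, OF A0] by iprover
  show ?thesis
  proof (intro bexI[OF _ A(1)] ballI impI)
    fix B assume B: "B \<in> F" "B \<subseteq> A"
    show "B = A"
    proof (rule ccontr)
      assume "B \<noteq> A"
      then have "B \<subset> A" using B(2) by auto
      then have "m B < m A" using assms(2)[OF A(1) B(1)] by simp
      moreover have "m A \<le> m B" using A(2) B(1) by simp
      ultimately show False by simp
    qed
  qed
qed

lemma dir_min:
  fixes m :: "'a set \<Rightarrow> nat"
  assumes "F \<noteq> {}" "\<And>A B. A \<in> F \<Longrightarrow> B \<in> F \<Longrightarrow> B \<subset> A \<Longrightarrow> m B < m A"
    and "\<And>A B. A \<in> F \<Longrightarrow> B \<in> F \<Longrightarrow> \<exists>D\<in>F. D \<subseteq> A \<and> D \<subseteq> B"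
  shows "\<exists>A\<in>F. \<Inter>F = A"
proof -
  have "\<exists>A\<in>F. \<forall>B\<in>F. B \<subseteq> A \<longrightarrow> B = A"
    by (rule min_fam[of F m]) (use assms in auto)
  then obtain A where A: "A \<in> F" "\<forall>B\<in>F. B \<subseteq> A \<longrightarrow> B = A" by (elim bexE) iprover
  have "\<And>B. B \<in> F \<Longrightarrow> A \<subseteq> B"
  proof -
    fix B assume "B \<in> F"
    then obtain D where "D \<in> F" "D \<subseteq> A" "D \<subseteq> B" using assms(3) A(1) by blast
    then show "A \<subseteq> B" using A(2) by blast
  qed
  then have "\<Inter>F = A" using A(1) by blast
  then show ?thesis using A(1) by blast
qed

lemma IL:
  fixes I :: "'i set" and le :: "'i \<Rightarrow> 'i \<Rightarrow> bool" and P :: "'i \<Rightarrow> 'a set"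
    and g :: "'i \<Rightarrow> 'i \<Rightarrow> 'a \<Rightarrow> 'a" and C :: "'i \<Rightarrow> 'a set set" and m :: "'i \<Rightarrow> 'a set \<Rightarrow> nat"
  assumes refl: "\<And>i. i\<in>I \<Longrightarrow> le i i"
    and trans: "\<And>i j k. i\<in>I \<Longrightarrow> j\<in>I \<Longrightarrow> k\<in>I \<Longrightarrow> le i j \<Longrightarrow> le j k \<Longrightarrow> le i k"
    and dir: "\<And>i j. i\<in>I \<Longrightarrow> j\<in>I \<Longrightarrow> \<exists>k\<in>I. le i k \<and> le j k"
    and gid: "\<And>i x. i\<in>I \<Longrightarrow> x\<in>P i \<Longrightarrow> g i i x = x"
    and gcomp: "\<And>i j k x. i\<in>I \<Longrightarrow> j\<in>I \<Longrightarrow> k\<in>I \<Longrightarrow> le i j \<Longrightarrow> le j k \<Longrightarrow> x\<in>P k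
        \<Longrightarrow> g i j (g j k x) = g i k x"
    and gP: "\<And>i j x. i\<in>I \<Longrightarrow> j\<in>I \<Longrightarrow> le i j \<Longrightarrow> x\<in>P j \<Longrightarrow> g i j x \<in> P i"
    and PC: "\<And>i. i\<in>I \<Longrightarrow> P i \<in> C i"
    and Pne: "\<And>i. i\<in>I \<Longrightarrow> P i \<noteq> {}"
    and Csub: "\<And>i A. i\<in>I \<Longrightarrow> A \<in> C i \<Longrightarrow> A \<subseteq> P i"
    and Cimg: "\<And>i j A. i\<in>I \<Longrightarrow> j\<in>I \<Longrightarrow> le i j \<Longrightarrow> A \<in> C j \<Longrightarrow> A \<noteq> {} \<Longrightarrow> g i j ` A \<in> C i"
    and Cpre: "\<And>i j A x. i\<in>I \<Longrightarrow> j\<in>I \<Longrightarrow> le i j \<Longrightarrow> A \<in> C j \<Longrightarrow> A \<inter> {z. g i j z = x} \<noteq> {}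
        \<Longrightarrow> A \<inter> {z. g i j z = x} \<in> C j"
    and Cmeas: "\<And>i A B. i\<in>I \<Longrightarrow> A \<in> C i \<Longrightarrow> B \<in> C i \<Longrightarrow> B \<noteq> {} \<Longrightarrow> B \<subset> A \<Longrightarrow> m i B < m i A"
  shows "\<exists>s. \<forall>i\<in>I. s i \<in> P i \<and> (\<forall>j\<in>I. le i j \<longrightarrow> g i j (s j) = s i)"
proof -
  define Sys where "Sys = {Q. (\<forall>i. i \<notin> I \<longrightarrow> Q i = {}) \<and> (\<forall>i\<in>I. Q i \<in> C i \<and> Q i \<noteq> {})
     \<and> (\<forall>i\<in>I. \<forall>j\<in>I. le i j \<longrightarrow> g i j ` Q j \<subseteq> Q i)}"
  define R where "R = (\<lambda>(Q::'i \<Rightarrow> 'a set) Q'. \<forall>i. Q' i \<subseteq> Q i)"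
  have fammin: "\<exists>A\<in>F. \<Inter>F = A" if "i \<in> I" "F \<subseteq> C i" "F \<noteq> {}" "{} \<notin> F"
      "\<And>A B. A \<in> F \<Longrightarrow> B \<in> F \<Longrightarrow> \<exists>D\<in>F. D \<subseteq> A \<and> D \<subseteq> B" for i F
  proof (rule dir_min[where m="m i"])
    show "F \<noteq> {}" by fact
    show "\<And>A B. A \<in> F \<Longrightarrow> B \<in> F \<Longrightarrow> B \<subset> A \<Longrightarrow> m i B < m i A"
      using Cmeas that by blast
    show "\<And>A B. A \<in> F \<Longrightarrow> B \<in> F \<Longrightarrow> \<exists>D\<in>F. D \<subseteq> A \<and> D \<subseteq> B" by fact
  qed
  define P0 where "P0 = (\<lambda>i. if i \<in> I then P i else {})"
  have P0S: "P0 \<in> Sys"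
    unfolding Sys_def P0_def using PC Pne gP by auto
  have "\<exists>Q\<in>Sys. \<forall>Q'\<in>Sys. R Q Q' \<longrightarrow> Q' = Q"
  proof (rule predicate_Zorn)
    show "partial_order_on Sys (relation_of R Sys)"
    proof (rule partial_order_on_relation_ofI)
      show "\<And>a. a \<in> Sys \<Longrightarrow> R a a" by (simp add: R_def)
      show "\<And>a b c. R a b \<Longrightarrow> R b c \<Longrightarrow> R a c" unfolding R_def by blast
      show "\<And>a b. R a b \<Longrightarrow> R b a \<Longrightarrow> a = b" unfolding R_def by (rule ext) blast
    qed
  next
    fix CC assume CC: "CC \<in> Chains (relation_of R Sys)"
    show "\<exists>u\<in>Sys. \<forall>a\<in>CC. R a u"
    proof (cases "CC = {}")
      case True then show ?thesis using P0S by blast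
    next
      case False
      have CCS: "CC \<subseteq> Sys" using CC False unfolding Chains_def relation_of_def by blast
      have CCc: "\<And>a b. a \<in> CC \<Longrightarrow> b \<in> CC \<Longrightarrow> R a b \<or> R b a"
        using CC unfolding Chains_def relation_of_def by blast
      define u where "u = (\<lambda>i. \<Inter>Q\<in>CC. Q i)"
      have ui: "\<exists>Q\<in>CC. u i = Q i" if "i \<in> I" for i
      proof -
        have "\<exists>A\<in>((\<lambda>Q. Q i) ` CC). \<Inter>((\<lambda>Q. Q i) ` CC) = A"
        proof (rule fammin[OF that])
          show "(\<lambda>Q. Q i) ` CC \<subseteq> C i" using CCS that by (auto simp: Sys_def)
          show "(\<lambda>Q. Q i) ` CC \<noteq> {}" using False by blast
          show "{} \<notin> (\<lambda>Q. Q i) ` CC" using CCS that by (force simp: Sys_def)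
          fix A B assume "A \<in> (\<lambda>Q. Q i) ` CC" "B \<in> (\<lambda>Q. Q i) ` CC"
          then obtain Q1 Q2 where "Q1 \<in> CC" "Q2 \<in> CC" "A = Q1 i" "B = Q2 i" by blast
          then show "\<exists>D\<in>(\<lambda>Q. Q i) ` CC. D \<subseteq> A \<and> D \<subseteq> B"
            using CCc[of Q1 Q2] unfolding R_def by blast
        qed
        then show ?thesis unfolding u_def by blast
      qed
      have "u \<in> Sys"
        unfolding Sys_def
      proof (intro CollectI conjI ballI allI impI)
        fix i assume "i \<notin> I"
        obtain Q where "Q\<in>CC" using False by blast
        then have "Q i = {}" using CCS \<open>i\<notin>I\<close> by (auto simp: Sys_def)
        then show "u i = {}" using \<open>Q\<in>CC\<close> by (auto simp: u_def)
      next
        fix i assume "i \<in> I"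
        then obtain Q where "Q \<in> CC" "u i = Q i" using ui by blast
        then show "u i \<in> C i" "u i \<noteq> {}" using CCS \<open>i\<in>I\<close> by (auto simp: Sys_def)
      next
        fix i j assume "i \<in> I" "j \<in> I" "le i j"
        show "g i j ` u j \<subseteq> u i"
        proof
          fix y assume "y \<in> g i j ` u j"
          then obtain x where x: "x \<in> u j" "y = g i j x" by blast
          show "y \<in> u i" unfolding u_def
          proof
            fix Q assume "Q \<in> CC"
            then have "x \<in> Q j" using x(1) by (auto simp: u_def)
            moreover have "Q \<in> Sys" using CCS \<open>Q\<in>CC\<close> by blast
            then have "g i j ` Q j \<subseteq> Q i" using \<open>i\<in>I\<close> \<open>j\<in>I\<close> \<open>le i j\<close>
              unfolding Sys_def by blast
            ultimately show "y \<in> Q i" using x(2) by blast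
          qed
        qed
      qed
      moreover have "\<forall>a\<in>CC. R a u" unfolding R_def u_def by blast
      ultimately show ?thesis by blast
    qed
  qed
  then obtain Q where QS: "Q \<in> Sys" and Qmin: "\<And>Q'. Q' \<in> Sys \<Longrightarrow> R Q Q' \<Longrightarrow> Q' = Q" by blast
  have Qout: "\<And>i. i \<notin> I \<Longrightarrow> Q i = {}" and QC: "\<And>i. i\<in>I \<Longrightarrow> Q i \<in> C i"
    and Qne: "\<And>i. i\<in>I \<Longrightarrow> Q i \<noteq> {}"
    and Qg: "\<And>i j. i\<in>I \<Longrightarrow> j\<in>I \<Longrightarrow> le i j \<Longrightarrow> g i j ` Q j \<subseteq> Q i"
    using QS unfolding Sys_def by auto
  have QP: "\<And>i. i\<in>I \<Longrightarrow> Q i \<subseteq> P i" using QC Csub by blast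
  have surj: "g i j ` Q j = Q i" if ij: "i\<in>I" "j\<in>I" "le i j" for i j
  proof -
    define Qs where "Qs = (\<lambda>i. if i \<in> I then \<Inter>{g i j ` Q j |j. j\<in>I \<and> le i j} else {})"
    have Qsi: "\<exists>j. j\<in>I \<and> le i j \<and> Qs i = g i j ` Q j" if "i \<in> I" for i
    proof -
      have "\<exists>A\<in>{g i j ` Q j |j. j\<in>I \<and> le i j}. \<Inter>{g i j ` Q j |j. j\<in>I \<and> le i j} = A"
      proof (rule fammin[OF that])
        show "{g i j ` Q j |j. j\<in>I \<and> le i j} \<subseteq> C i" using Cimg QC Qne that by blast
        show "{g i j ` Q j |j. j\<in>I \<and> le i j} \<noteq> {}" using refl that by blast
        show "{} \<notin> {g i j ` Q j |j. j\<in>I \<and> le i j}" using Qne by blast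
        fix A B assume "A \<in> {g i j ` Q j |j. j\<in>I \<and> le i j}" "B \<in> {g i j ` Q j |j. j\<in>I \<and> le i j}"
        then obtain j1 j2 where j: "j1\<in>I" "le i j1" "A = g i j1 ` Q j1" "j2\<in>I" "le i j2" "B = g i j2 ` Q j2"
          by blast
        obtain k where k: "k\<in>I" "le j1 k" "le j2 k" using dir[OF j(1) j(4)] by blast
        have sub: "g i k ` Q k \<subseteq> g i jj ` Q jj" if "jj\<in>I" "le i jj" "le jj k" for jj
        proof
          fix y assume "y \<in> g i k ` Q k"
          then obtain z where z: "z \<in> Q k" "y = g i k z" by blast
          have "y = g i jj (g jj k z)" using gcomp[of i jj k z] z QP[OF k(1)] that k(1) \<open>i\<in>I\<close> by auto
          moreover have "g jj k z \<in> Q jj" using Qg[OF that(1) k(1) that(3)] z(1) by blast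
          ultimately show "y \<in> g i jj ` Q jj" by blast
        qed
        show "\<exists>D\<in>{g i j ` Q j |j. j\<in>I \<and> le i j}. D \<subseteq> A \<and> D \<subseteq> B"
          using sub[of j1] sub[of j2] j k trans[OF \<open>i\<in>I\<close> j(1) k(1) j(2) k(2)] by blast
      qed
      then show ?thesis unfolding Qs_def using that by auto
    qed
    have "Qs \<in> Sys"
      unfolding Sys_def
    proof (intro CollectI conjI ballI allI impI)
      fix i assume "i \<notin> I" then show "Qs i = {}" by (simp add: Qs_def)
    next
      fix i assume "i\<in>I"
      then obtain j where "j\<in>I" "le i j" "Qs i = g i j ` Q j" using Qsi by blast
      then show "Qs i \<in> C i" "Qs i \<noteq> {}" using Cimg QC Qne \<open>i\<in>I\<close> by auto
    next
      fix i j assume ij: "i\<in>I" "j\<in>I" "le i j"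
      show "g i j ` Qs j \<subseteq> Qs i"
      proof
        fix y assume "y \<in> g i j ` Qs j"
        then obtain x where x: "x \<in> Qs j" "y = g i j x" by blast
        have "y \<in> g i k ` Q k" if k: "k \<in> I \<and> le i k" for k
        proof -
          obtain mm where mm: "mm\<in>I" "le j mm" "le k mm" using dir[OF ij(2), of k] k by blast
          have "x \<in> g j mm ` Q mm" using x(1) mm ij(2) by (auto simp: Qs_def)
          then obtain z where z: "z \<in> Q mm" "x = g j mm z" by blast
          have zP: "z \<in> P mm" using z(1) QP mm(1) by blast
          have "y = g i mm z" using gcomp[OF ij(1,2) mm(1) ij(3) mm(2) zP] x(2) z(2) by simp
          also have "\<dots> = g i k (g k mm z)" using gcomp[OF ij(1) _ mm(1) _ mm(3) zP] k by simp
          finally show "y \<in> g i k ` Q k" using Qg[OF _ mm(1) mm(3)] k z(1) by blast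
        qed
        then show "y \<in> Qs i" unfolding Qs_def using ij(1) by auto
      qed
    qed
    moreover have "R Q Qs"
      unfolding R_def
    proof
      fix i show "Qs i \<subseteq> Q i"
      proof (cases "i \<in> I")
        case True
        have "Qs i \<subseteq> g i i ` Q i" using True refl[OF True] by (auto simp: Qs_def)
        also have "\<dots> = Q i"
        proof -
          have "\<And>x. x \<in> Q i \<Longrightarrow> g i i x = x" using gid QP True by blast
          then show ?thesis by (metis image_cong image_ident)
        qed
        finally show ?thesis .
      qed (simp add: Qs_def)
    qed
    ultimately have "Qs = Q" using Qmin by blast
    then have "Q i = Qs i" by simp
    also have "\<dots> = \<Inter>{g i j ` Q j |j. j\<in>I \<and> le i j}" using ij(1) by (simp add: Qs_def)
    also have "\<dots> \<subseteq> g i j ` Q j" using ij by (intro Inter_lower) blast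
    finally have "Q i \<subseteq> g i j ` Q j" .
    then show ?thesis using Qg[OF ij] by blast
  qed
  have single: "Q i0 = {x}" if i0: "i0 \<in> I" "x \<in> Q i0" for i0 x
  proof -
    define pre where "pre = (\<lambda>k. Q k \<inter> {z. g i0 k z = x})"
    define Rs where "Rs = (\<lambda>i. if i \<in> I then \<Inter>{g i k ` pre k |k. k\<in>I \<and> le i k \<and> le i0 k} else {})"
    have prene: "pre k \<noteq> {}" if "k\<in>I" "le i0 k" for k
    proof -
      have "x \<in> g i0 k ` Q k" using surj[OF i0(1) that] i0(2) by simp
      then show ?thesis by (auto simp: pre_def)
    qed
    have preC: "pre k \<in> C k" if "k\<in>I" "le i0 k" for k
      unfolding pre_def by (rule Cpre[OF i0(1) that(1) that(2) QC[OF that(1)]]) (use prene[OF that] pre_def in auto)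
    have premono: "g k mm ` pre mm \<subseteq> pre k" if "k\<in>I" "mm\<in>I" "le i0 k" "le k mm" for k mm
    proof
      fix w assume "w \<in> g k mm ` pre mm"
      then obtain z where z: "z \<in> Q mm" "g i0 mm z = x" "w = g k mm z" by (auto simp: pre_def)
      have "g i0 k w = x" using gcomp[OF i0(1) that(1,2,3,4), of z] z QP[OF that(2)] by auto
      moreover have "w \<in> Q k" using Qg[OF that(1,2,4)] z by blast
      ultimately show "w \<in> pre k" by (simp add: pre_def)
    qed
    have Rsi: "\<exists>k. k\<in>I \<and> le i k \<and> le i0 k \<and> Rs i = g i k ` pre k" if "i \<in> I" for i
    proof -
      have "\<exists>A\<in>{g i k ` pre k |k. k\<in>I \<and> le i k \<and> le i0 k}. \<Inter>{g i k ` pre k |k. k\<in>I \<and> le i k \<and> le i0 k} = A"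
      proof (rule fammin[OF that])
        show "{g i k ` pre k |k. k\<in>I \<and> le i k \<and> le i0 k} \<subseteq> C i" using Cimg preC prene that by blast
        show "{g i k ` pre k |k. k\<in>I \<and> le i k \<and> le i0 k} \<noteq> {}" using dir[OF that i0(1)] by blast
        show "{} \<notin> {g i k ` pre k |k. k\<in>I \<and> le i k \<and> le i0 k}" using prene by blast
        fix A B assume "A \<in> {g i k ` pre k |k. k\<in>I \<and> le i k \<and> le i0 k}"
          "B \<in> {g i k ` pre k |k. k\<in>I \<and> le i k \<and> le i0 k}"
        then obtain j1 j2 where j: "j1\<in>I" "le i j1" "le i0 j1" "A = g i j1 ` pre j1"
          "j2\<in>I" "le i j2" "le i0 j2" "B = g i j2 ` pre j2" by blast
        obtain k where k: "k\<in>I" "le j1 k" "le j2 k" using dir[OF j(1) j(5)] by blast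
        have sub: "g i k ` pre k \<subseteq> g i jj ` pre jj" if "jj\<in>I" "le i jj" "le jj k" "le i0 jj" for jj
        proof
          fix y assume "y \<in> g i k ` pre k"
          then obtain z where z: "z \<in> pre k" "y = g i k z" by blast
          have "y = g i jj (g jj k z)" using gcomp[of i jj k z] z QP[OF k(1)] that k(1) \<open>i\<in>I\<close>
            by (auto simp: pre_def)
          moreover have "g jj k z \<in> pre jj" using premono[OF that(1) k(1) that(4) that(3)] z(1) by blast
          ultimately show "y \<in> g i jj ` pre jj" by blast
        qed
        show "\<exists>D\<in>{g i k ` pre k |k. k\<in>I \<and> le i k \<and> le i0 k}. D \<subseteq> A \<and> D \<subseteq> B"
          using sub[of j1] sub[of j2] j k trans[OF \<open>i\<in>I\<close> j(1) k(1) j(2) k(2)]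
            trans[OF i0(1) j(1) k(1) j(3) k(2)] by blast
      qed
      then show ?thesis unfolding Rs_def using that by auto
    qed
    have "Rs \<in> Sys"
      unfolding Sys_def
    proof (intro CollectI conjI ballI allI impI)
      fix i assume "i \<notin> I" then show "Rs i = {}" by (simp add: Rs_def)
    next
      fix i assume "i\<in>I"
      then obtain k where "k\<in>I" "le i k" "le i0 k" "Rs i = g i k ` pre k" using Rsi by blast
      then show "Rs i \<in> C i" "Rs i \<noteq> {}" using Cimg preC prene \<open>i\<in>I\<close> by auto
    next
      fix i j assume ij: "i\<in>I" "j\<in>I" "le i j"
      show "g i j ` Rs j \<subseteq> Rs i"
      proof
        fix y assume "y \<in> g i j ` Rs j"
        then obtain x where x: "x \<in> Rs j" "y = g i j x" by blast
        have "y \<in> g i k ` pre k" if k: "k \<in> I \<and> le i k \<and> le i0 k" for k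
        proof -
          obtain mm where mm: "mm\<in>I" "le j mm" "le k mm" using dir[OF ij(2), of k] k by blast
          have "le i0 mm" using trans[OF i0(1) _ mm(1) _ mm(3)] k by blast
          then have "x \<in> g j mm ` pre mm" using x(1) mm ij(2) by (auto simp: Rs_def)
          then obtain z where z: "z \<in> pre mm" "x = g j mm z" by blast
          have zP: "z \<in> P mm" using z(1) QP mm(1) by (auto simp: pre_def)
          have "y = g i mm z" using gcomp[OF ij(1,2) mm(1) ij(3) mm(2) zP] x(2) z(2) by simp
          also have "\<dots> = g i k (g k mm z)" using gcomp[OF ij(1) _ mm(1) _ mm(3) zP] k by simp
          finally show "y \<in> g i k ` pre k"
            using premono[of k mm] k mm \<open>le i0 mm\<close> z(1) by blast
        qed
        then show "y \<in> Rs i" unfolding Rs_def using ij(1) by auto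
      qed
    qed
    moreover have "R Q Rs"
      unfolding R_def
    proof
      fix i show "Rs i \<subseteq> Q i"
      proof (cases "i \<in> I")
        case True
        then obtain k where k: "k\<in>I" "le i k" "le i0 k" "Rs i = g i k ` pre k" using Rsi by blast
        have "g i k ` pre k \<subseteq> g i k ` Q k" by (auto simp: pre_def)
        also have "\<dots> \<subseteq> Q i" using Qg[OF True k(1,2)] .
        finally show ?thesis using k(4) by simp
      qed (simp add: Rs_def Qout)
    qed
    ultimately have "Rs = Q" using Qmin by blast
    then have "Q i0 = Rs i0" by simp
    also have "\<dots> = \<Inter>{g i0 k ` pre k |k. k\<in>I \<and> le i0 k \<and> le i0 k}" using i0(1) by (simp add: Rs_def)
    also have "\<dots> \<subseteq> g i0 i0 ` pre i0" using i0(1) refl[OF i0(1)] by (intro Inter_lower) blast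
    finally have "Q i0 \<subseteq> g i0 i0 ` pre i0" .
    also have "\<dots> \<subseteq> {x}" by (auto simp: pre_def)
    finally show ?thesis using i0(2) by blast
  qed
  define s where "s = (\<lambda>i. SOME x. x \<in> Q i)"
  have sQ: "s i \<in> Q i" if "i \<in> I" for i
    unfolding s_def using Qne[OF that] by (simp add: some_in_eq)
  show ?thesis
  proof (intro exI ballI conjI allI impI)
    fix i assume "i \<in> I"
    then show "s i \<in> P i" using sQ QP by blast
    fix j assume "j \<in> I" "le i j"
    then have "g i j (s j) \<in> Q i" using Qg[OF \<open>i\<in>I\<close>] sQ by blast
    then show "g i j (s j) = s i" using single[OF \<open>i\<in>I\<close> sQ[OF \<open>i\<in>I\<close>]] by blast
  qed
qed



context vector_space begin

lemma dim_strict: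
  assumes F: "finite F" and U: "subspace U" and U': "subspace U'" and sub: "U \<subseteq> U'"
    and sp: "U' \<subseteq> span F" and ne: "U \<noteq> U'"
  shows "dim U < dim U'"
proof -
  obtain BU where BU: "BU \<subseteq> U" "independent BU" "U \<subseteq> span BU" "card BU = dim U"
    using basis_exists[of U] by blast
  obtain BU' where BU': "BU' \<subseteq> U'" "independent BU'" "U' \<subseteq> span BU'" "card BU' = dim U'"
    using basis_exists[of U'] by blast
  obtain x where x: "x \<in> U'" "x \<notin> U" using sub ne by blast
  have "span BU \<subseteq> U" using span_minimal[OF BU(1) U] .
  then have xn: "x \<notin> span BU" using x by blast
  have ind: "independent (insert x BU)" using independent_insertI[OF xn BU(2)] .
  have "BU' \<subseteq> span F" using BU'(1) sp by (rule order_trans)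
  then have finBU': "finite BU'" using independent_span_bound[OF F BU'(2)] by simp
  have "insert x BU \<subseteq> U'" using x(1) BU(1) sub by auto
  then have "insert x BU \<subseteq> span BU'" using BU'(3) by (rule order_trans)
  then have c: "finite (insert x BU) \<and> card (insert x BU) \<le> card BU'"
    by (rule independent_span_bound[OF finBU' ind])
  have "x \<notin> BU" using x BU(1) by blast
  then have "card (insert x BU) = card BU + 1" using c by simp
  then show ?thesis using c BU(4) BU'(4) by simp
qed

definition vaff :: "'b set \<Rightarrow> 'b set \<Rightarrow> bool" where
  "vaff W A \<longleftrightarrow> (\<exists>z U. subspace U \<and> U \<subseteq> W \<and> z \<in> W \<and> A = (\<lambda>u. z + u) ` U)"

lemma dirset: "subspace U \<Longrightarrow> {x - y |x y. x \<in> (\<lambda>u. z + u) ` U \<and> y \<in> (\<lambda>u. z + u) ` U} = U"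
proof (rule set_eqI, rule iffI)
  fix w assume U: "subspace U" and "w \<in> {x - y |x y. x \<in> (\<lambda>u. z + u) ` U \<and> y \<in> (\<lambda>u. z + u) ` U}"
  then obtain u1 u2 where "u1 \<in> U" "u2 \<in> U" "w = (z + u1) - (z + u2)" by blast
  then show "w \<in> U" using subspace_diff[OF U] by simp
next
  fix w assume U: "subspace U" and w: "w \<in> U"
  have "w = (z + w) - (z + 0)" by simp
  moreover have "z + w \<in> (\<lambda>u. z + u) ` U" "z + 0 \<in> (\<lambda>u. z + u) ` U"
    using w subspace_0[OF U] by blast+
  ultimately show "w \<in> {x - y |x y. x \<in> (\<lambda>u. z + u) ` U \<and> y \<in> (\<lambda>u. z + u) ` U}" by blast
qed

lemma IL_aff:
  fixes I :: "'i set" and le :: "'i \<Rightarrow> 'i \<Rightarrow> bool" and W :: "'i \<Rightarrow> 'b set"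
    and g :: "'i \<Rightarrow> 'i \<Rightarrow> 'b \<Rightarrow> 'b" and P :: "'i \<Rightarrow> 'b set"
  assumes refl: "\<And>i. i\<in>I \<Longrightarrow> le i i"
    and trans: "\<And>i j k. i\<in>I \<Longrightarrow> j\<in>I \<Longrightarrow> k\<in>I \<Longrightarrow> le i j \<Longrightarrow> le j k \<Longrightarrow> le i k"
    and dir: "\<And>i j. i\<in>I \<Longrightarrow> j\<in>I \<Longrightarrow> \<exists>k\<in>I. le i k \<and> le j k"
    and Wsub: "\<And>i. i\<in>I \<Longrightarrow> subspace (W i)"
    and Wfin: "\<And>i. i\<in>I \<Longrightarrow> \<exists>F. finite F \<and> W i \<subseteq> span F"
    and gW: "\<And>i j x. i\<in>I \<Longrightarrow> j\<in>I \<Longrightarrow> le i j \<Longrightarrow> x \<in> W j \<Longrightarrow> g i j x \<in> W i"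
    and gadd: "\<And>i j x y. i\<in>I \<Longrightarrow> j\<in>I \<Longrightarrow> le i j \<Longrightarrow> x \<in> W j \<Longrightarrow> y \<in> W j
        \<Longrightarrow> g i j (x + y) = g i j x + g i j y"
    and gscale: "\<And>i j c x. i\<in>I \<Longrightarrow> j\<in>I \<Longrightarrow> le i j \<Longrightarrow> x \<in> W j \<Longrightarrow> g i j (c *s x) = c *s g i j x"
    and gid: "\<And>i x. i\<in>I \<Longrightarrow> x\<in>W i \<Longrightarrow> g i i x = x"
    and gcomp: "\<And>i j k x. i\<in>I \<Longrightarrow> j\<in>I \<Longrightarrow> k\<in>I \<Longrightarrow> le i j \<Longrightarrow> le j k \<Longrightarrow> x\<in>W k
        \<Longrightarrow> g i j (g j k x) = g i k x"
    and Paff: "\<And>i. i\<in>I \<Longrightarrow> local.vaff (W i) (P i)"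
    and gP: "\<And>i j x. i\<in>I \<Longrightarrow> j\<in>I \<Longrightarrow> le i j \<Longrightarrow> x\<in>P j \<Longrightarrow> g i j x \<in> P i"
  shows "\<exists>s. \<forall>i\<in>I. s i \<in> P i \<and> (\<forall>j\<in>I. le i j \<longrightarrow> g i j (s j) = s i)"
proof -
  have PW: "P i \<subseteq> W i" if i: "i \<in> I" for i
  proof -
    obtain z U where zU: "subspace U" "U \<subseteq> W i" "z \<in> W i" "P i = (\<lambda>u. z + u) ` U"
      using Paff[OF i] unfolding vaff_def by blast
    show ?thesis
    proof
      fix w assume "w \<in> P i"
      then obtain u where "u \<in> U" "w = z + u" using zU(4) by blast
      then show "w \<in> W i" using subspace_add[OF Wsub[OF i] zU(3)] zU(2) by auto
    qed
  qed
  have g0: "g i j 0 = 0" if "i\<in>I" "j\<in>I" "le i j" for i j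
    using gadd[OF that, of 0 0] subspace_0[OF Wsub[OF that(2)]] by simp
  have gdiff: "g i j (x - y) = g i j x - g i j y" if "i\<in>I" "j\<in>I" "le i j" "x \<in> W j" "y \<in> W j" for i j x y
  proof -
    have "x - y \<in> W j" using subspace_diff[OF Wsub[OF that(2)] that(4,5)] .
    then have "g i j x = g i j (x - y) + g i j y" using gadd[OF that(1-3), of "x - y" y] that(5) by simp
    then show ?thesis by (simp add: algebra_simps)
  qed
  define C where "C = (\<lambda>i. {A. A \<subseteq> P i \<and> local.vaff (W i) A})"
  define m where "m = (\<lambda>(i::'i) A. dim {x - y |x y. x \<in> A \<and> y \<in> A})"
  show ?thesis
  proof (rule IL[where C=C and m=m])
    show "\<And>i. i \<in> I \<Longrightarrow> le i i" by fact
    show "\<And>i j k. i \<in> I \<Longrightarrow> j \<in> I \<Longrightarrow> k \<in> I \<Longrightarrow> le i j \<Longrightarrow> le j k \<Longrightarrow> le i k" by fact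
    show "\<And>i j. i \<in> I \<Longrightarrow> j \<in> I \<Longrightarrow> \<exists>k\<in>I. le i k \<and> le j k" by fact
    show "\<And>i x. i \<in> I \<Longrightarrow> x \<in> P i \<Longrightarrow> g i i x = x" using gid PW by blast
    show "\<And>i j k x. i \<in> I \<Longrightarrow> j \<in> I \<Longrightarrow> k \<in> I \<Longrightarrow> le i j \<Longrightarrow> le j k \<Longrightarrow> x \<in> P k
        \<Longrightarrow> g i j (g j k x) = g i k x" using gcomp PW by blast
    show "\<And>i j x. i \<in> I \<Longrightarrow> j \<in> I \<Longrightarrow> le i j \<Longrightarrow> x \<in> P j \<Longrightarrow> g i j x \<in> P i" by fact
    show "\<And>i. i \<in> I \<Longrightarrow> P i \<in> C i" using Paff by (simp add: C_def)
    show "\<And>i. i \<in> I \<Longrightarrow> P i \<noteq> {}" using Paff subspace_0 unfolding vaff_def by blast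
    show "\<And>i A. i \<in> I \<Longrightarrow> A \<in> C i \<Longrightarrow> A \<subseteq> P i" by (simp add: C_def)
  next
    fix i j A assume ij: "i \<in> I" "j \<in> I" "le i j" and A: "A \<in> C j" "A \<noteq> {}"
    obtain z U where zU: "subspace U" "U \<subseteq> W j" "z \<in> W j" "A = (\<lambda>u. z + u) ` U" "A \<subseteq> P j"
      using A(1) unfolding C_def vaff_def by blast
    have img: "g i j ` A = (\<lambda>u. g i j z + u) ` (g i j ` U)"
    proof (rule set_eqI, rule iffI)
      fix y assume "y \<in> g i j ` A"
      then obtain u where u: "u \<in> U" "y = g i j (z + u)" using zU(4) by blast
      then have "y = g i j z + g i j u" using gadd[OF ij zU(3)] zU(2) by auto
      then show "y \<in> (\<lambda>u. g i j z + u) ` (g i j ` U)" using u(1) by blast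
    next
      fix y assume "y \<in> (\<lambda>u. g i j z + u) ` (g i j ` U)"
      then obtain u where u: "u \<in> U" "y = g i j z + g i j u" by blast
      then have "y = g i j (z + u)" using gadd[OF ij zU(3)] zU(2) by auto
      then show "y \<in> g i j ` A" using u(1) zU(4) by blast
    qed
    have sU: "subspace (g i j ` U)"
    proof (rule subspaceI)
      show "0 \<in> g i j ` U" using g0[OF ij] subspace_0[OF zU(1)] by (metis image_eqI)
    next
      fix x y assume "x \<in> g i j ` U" "y \<in> g i j ` U"
      then obtain a b where "a \<in> U" "b \<in> U" "x = g i j a" "y = g i j b" by blast
      then show "x + y \<in> g i j ` U"
        using gadd[OF ij, of a b] zU(2) subspace_add[OF zU(1)] by (metis image_eqI subsetD)
    next
      fix c x assume "x \<in> g i j ` U"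
      then obtain a where "a \<in> U" "x = g i j a" by blast
      then show "c *s x \<in> g i j ` U"
        using gscale[OF ij, of a c] zU(2) subspace_scale[OF zU(1)] by (metis image_eqI subsetD)
    qed
    show "g i j ` A \<in> C i"
      unfolding C_def vaff_def
    proof (intro CollectI conjI exI)
      show "g i j ` A \<subseteq> P i" using gP[OF ij] zU(5) by blast
      show "subspace (g i j ` U)" by fact
      show "g i j ` U \<subseteq> W i" using gW[OF ij] zU(2) by blast
      show "g i j z \<in> W i" using gW[OF ij zU(3)] .
      show "g i j ` A = (\<lambda>u. g i j z + u) ` (g i j ` U)" by fact
    qed
  next
    fix i j A x assume ij: "i \<in> I" "j \<in> I" "le i j" and A: "A \<in> C j"
      and ne: "A \<inter> {z. g i j z = x} \<noteq> {}"
    obtain z U where zU: "subspace U" "U \<subseteq> W j" "z \<in> W j" "A = (\<lambda>u. z + u) ` U" "A \<subseteq> P j"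
      using A(1) unfolding C_def vaff_def by blast
    obtain z' where z': "z' \<in> A" "g i j z' = x" using ne by blast
    obtain u0 where u0: "u0 \<in> U" "z' = z + u0" using z'(1) zU(4) by blast
    have z'W: "z' \<in> W j" using z'(1) zU(5) PW[OF ij(2)] by blast
    define U' where "U' = U \<inter> {u. g i j u = 0}"
    have sU': "subspace U'"
    proof (rule subspaceI)
      show "0 \<in> U'" using g0[OF ij] subspace_0[OF zU(1)] by (simp add: U'_def)
    next
      fix a b assume "a \<in> U'" "b \<in> U'"
      then show "a + b \<in> U'" using gadd[OF ij, of a b] zU(2) subspace_add[OF zU(1)] by (auto simp: U'_def)
    next
      fix c a assume "a \<in> U'"
      then show "c *s a \<in> U'" using gscale[OF ij, of a c] zU(2) subspace_scale[OF zU(1)] by (auto simp: U'_def)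
    qed
    have eq: "A \<inter> {z. g i j z = x} = (\<lambda>u. z' + u) ` U'"
    proof (rule set_eqI, rule iffI)
      fix w assume "w \<in> A \<inter> {z. g i j z = x}"
      then obtain u where u: "u \<in> U" "w = z + u" "g i j w = x" using zU(4) by blast
      have "u - u0 \<in> U" using subspace_diff[OF zU(1) u(1) u0(1)] .
      moreover have "g i j (u - u0) = 0"
      proof -
        have "g i j w = g i j z + g i j u" using gadd[OF ij zU(3)] u zU(2) by auto
        moreover have "g i j z' = g i j z + g i j u0" using gadd[OF ij zU(3)] u0 zU(2) by auto
        ultimately have "g i j u = g i j u0" using u(3) z'(2) by simp
        moreover have "u \<in> W j" "u0 \<in> W j" using u(1) u0(1) zU(2) by auto
        ultimately show ?thesis using gdiff[OF ij] by simp
      qed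
      ultimately have "u - u0 \<in> U'" by (simp add: U'_def)
      moreover have "w = z' + (u - u0)" using u(2) u0(2) by simp
      ultimately show "w \<in> (\<lambda>u. z' + u) ` U'" by blast
    next
      fix w assume "w \<in> (\<lambda>u. z' + u) ` U'"
      then obtain u where u: "u \<in> U" "g i j u = 0" "w = z' + u" by (auto simp: U'_def)
      have "w = z + (u0 + u)" using u(3) u0(2) by (simp add: algebra_simps)
      moreover have "u0 + u \<in> U" using subspace_add[OF zU(1) u0(1) u(1)] .
      ultimately have "w \<in> A" using zU(4) by blast
      moreover have "g i j w = x" using gadd[OF ij z'W, of u] u zU(2) z'(2) by auto
      ultimately show "w \<in> A \<inter> {z. g i j z = x}" by blast
    qed
    show "A \<inter> {z. g i j z = x} \<in> C j"
      unfolding C_def vaff_def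
    proof (intro CollectI conjI exI)
      show "A \<inter> {z. g i j z = x} \<subseteq> P j" using zU(5) by blast
      show "subspace U'" by fact
      show "U' \<subseteq> W j" using zU(2) by (auto simp: U'_def)
      show "z' \<in> W j" by fact
      show "A \<inter> {z. g i j z = x} = (\<lambda>u. z' + u) ` U'" by fact
    qed
  next
    fix i A B assume i: "i \<in> I" and A: "A \<in> C i" and B: "B \<in> C i" "B \<noteq> {}" "B \<subset> A"
    obtain z U where zU: "subspace U" "U \<subseteq> W i" "z \<in> W i" "A = (\<lambda>u. z + u) ` U"
      using A unfolding C_def vaff_def by blast
    obtain z' U' where zU': "subspace U'" "U' \<subseteq> W i" "z' \<in> W i" "B = (\<lambda>u. z' + u) ` U'"
      using B(1) unfolding C_def vaff_def by blast
    have mA: "m i A = dim U" unfolding m_def zU(4) dirset[OF zU(1)] by simp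
    have mB: "m i B = dim U'" unfolding m_def zU'(4) dirset[OF zU'(1)] by simp
    have z'A: "z' \<in> A" using B(3) zU'(4) subspace_0[OF zU'(1)] by force
    then obtain u0 where u0: "u0 \<in> U" "z' = z + u0" using zU(4) by blast
    have sub: "U' \<subseteq> U"
    proof
      fix u assume "u \<in> U'"
      then have "z' + u \<in> A" using B(3) zU'(4) by blast
      then obtain u1 where "u1 \<in> U" "z' + u = z + u1" using zU(4) by blast
      then have "u = u1 - u0" using u0(2) by (simp add: algebra_simps)
      then show "u \<in> U" using subspace_diff[OF zU(1) \<open>u1 \<in> U\<close> u0(1)] by simp
    qed
    have neq: "U' \<noteq> U"
    proof
      assume "U' = U"
      have "A \<subseteq> B"
      proof
        fix w assume "w \<in> A"
        then obtain u where "u \<in> U" "w = z + u" using zU(4) by blast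
        then have "w = z' + (u - u0)" using u0(2) by (simp add: algebra_simps)
        moreover have "u - u0 \<in> U'" using \<open>U' = U\<close> subspace_diff[OF zU(1) \<open>u \<in> U\<close> u0(1)] by simp
        ultimately show "w \<in> B" using zU'(4) by blast
      qed
      then show False using B(3) by blast
    qed
    obtain F where F: "finite F" "W i \<subseteq> span F" using Wfin[OF i] by blast
    show "m i B < m i A" unfolding mA mB
      by (rule dim_strict[OF F(1) zU'(1) zU(1) sub]) (use zU(2) F(2) neq in auto)
  qed
qed

end



lemma pleq_refl[simp]: "pleq p p" by (simp add: pleq_def)
lemma pleq_trans: "pleq p q \<Longrightarrow> pleq q r \<Longrightarrow> pleq p r" by (auto simp: pleq_def)

context
  fixes sc :: "'k::field \<Rightarrow> 'v::ab_group_add \<Rightarrow> 'v"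
    and V :: "'s::linorder \<times> 't::linorder \<Rightarrow> 'v set"
    and f :: "'s \<times> 't \<Rightarrow> 's \<times> 't \<Rightarrow> 'v \<Rightarrow> 'v"
  assumes pm: "pmod sc V f"
begin

interpretation vs: vector_space sc using pm by (simp add: pmod_def)

lemma Vsub: "vs.subspace (V p)" using pm unfolding pmod_def by blast
lemma V0: "0 \<in> V p" using vs.subspace_0[OF Vsub] .
lemma Vadd: "x \<in> V p \<Longrightarrow> y \<in> V p \<Longrightarrow> x + y \<in> V p" using vs.subspace_add[OF Vsub] .
lemma Vscale: "x \<in> V p \<Longrightarrow> sc c x \<in> V p" using vs.subspace_scale[OF Vsub] .
lemma Vdiff: "x \<in> V p \<Longrightarrow> y \<in> V p \<Longrightarrow> x - y \<in> V p" using vs.subspace_diff[OF Vsub] .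
lemma Vneg: "x \<in> V p \<Longrightarrow> - x \<in> V p" using vs.subspace_neg[OF Vsub] .
lemma fV: "pleq p q \<Longrightarrow> x \<in> V p \<Longrightarrow> f p q x \<in> V q" using pm unfolding pmod_def by blast
lemma fadd: "pleq p q \<Longrightarrow> x \<in> V p \<Longrightarrow> y \<in> V p \<Longrightarrow> f p q (x + y) = f p q x + f p q y"
  using pm unfolding pmod_def lin_on_def by blast
lemma fscale: "pleq p q \<Longrightarrow> x \<in> V p \<Longrightarrow> f p q (sc c x) = sc c (f p q x)"
  using pm unfolding pmod_def lin_on_def by blast
lemma fid: "x \<in> V p \<Longrightarrow> f p p x = x" using pm unfolding pmod_def by blast
lemma fcomp: "pleq p q \<Longrightarrow> pleq q r \<Longrightarrow> x \<in> V p \<Longrightarrow> f q r (f p q x) = f p r x"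
  using pm unfolding pmod_def by blast
lemma f0: "pleq p q \<Longrightarrow> f p q 0 = 0"
  using fadd[of p q 0 0] V0[of p] by simp
lemma fdiff: "pleq p q \<Longrightarrow> x \<in> V p \<Longrightarrow> y \<in> V p \<Longrightarrow> f p q (x - y) = f p q x - f p q y"
proof -
  assume a: "pleq p q" "x \<in> V p" "y \<in> V p"
  have "f p q x = f p q ((x - y) + y)" by simp
  also have "\<dots> = f p q (x - y) + f p q y" using fadd[OF a(1) Vdiff[OF a(2,3)] a(3)] .
  finally show ?thesis by (simp add: algebra_simps)
qed

definition N1 :: "('s \<times> 't \<Rightarrow> 'v) \<Rightarrow> 's \<times> 't \<Rightarrow> 'v set" where
  "N1 e q = range (\<lambda>c. sc c (e q))"

lemma decomp_span:
  assumes ind: "indecomposable sc V f"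
    and eV: "\<And>q. e q \<in> V q" and ecomp: "\<And>p q. pleq p q \<Longrightarrow> f p q (e p) = e q"
    and ne: "e p0 \<noteq> 0"
    and supc: "\<And>q r. e q \<noteq> 0 \<Longrightarrow> e r \<noteq> 0 \<Longrightarrow> e (max (fst q) (fst r), max (snd q) (snd r)) \<noteq> 0"
  shows "V q = N1 e q"
proof -
  have N1sc: "sc c (e q) \<in> N1 e q" for c q unfolding N1_def by (rule rangeI)
  have N1V: "N1 e q \<subseteq> V q" for q
  proof
    fix x assume "x \<in> N1 e q"
    then obtain c where "x = sc c (e q)" unfolding N1_def by blast
    then show "x \<in> V q" using Vscale[OF eV[of q]] by simp
  qed
  have N1S: "vs.subspace (N1 e q)" for q
  proof (rule vs.subspaceI)
    show "0 \<in> N1 e q" using N1sc[of 0 q] by simp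
  next
    fix x y assume "x \<in> N1 e q" "y \<in> N1 e q"
    then obtain a b where "x = sc a (e q)" "y = sc b (e q)" by (auto simp: N1_def)
    then have "x + y = sc (a + b) (e q)" by (simp add: vs.scale_left_distrib)
    then show "x + y \<in> N1 e q" using N1sc by simp
  next
    fix c x assume "x \<in> N1 e q"
    then obtain a where "x = sc a (e q)" by (auto simp: N1_def)
    then have "sc c x = sc (c * a) (e q)" by simp
    then show "sc c x \<in> N1 e q" using N1sc by simp
  qed
  have N1m: "submod sc V f (N1 e)"
    unfolding submod_def
  proof (intro conjI allI impI)
    fix p :: "'s \<times> 't" show "N1 e p \<subseteq> V p" by (rule N1V)
    show "vs.subspace (N1 e p)" by (rule N1S)
  next
    fix p q :: "'s \<times> 't" assume pq: "pleq p q"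
    show "f p q ` N1 e p \<subseteq> N1 e q"
    proof
      fix y assume "y \<in> f p q ` N1 e p"
      then obtain c where "y = f p q (sc c (e p))" by (auto simp: N1_def)
      then have "y = sc c (e q)" using fscale[OF pq eV] ecomp[OF pq] by simp
      then show "y \<in> N1 e q" using N1sc by simp
    qed
  qed
  define Sys where "Sys = {N. submod sc V f N \<and> (\<forall>q. N q \<inter> N1 e q = {0})}"
  define R where "R = (\<lambda>(N::'s \<times> 't \<Rightarrow> 'v set) N'. \<forall>q. N q \<subseteq> N' q)"
  have zS: "(\<lambda>q. {0}) \<in> Sys"
    unfolding Sys_def submod_def
  proof (intro CollectI conjI allI impI)
    fix p :: "'s \<times> 't" show "{0} \<subseteq> V p" using V0 by simp
    show "vs.subspace {0}" by simp
    show "{0} \<inter> N1 e p = {0}" using N1S[of p] vs.subspace_0 by blast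
  next
    fix p q :: "'s \<times> 't" assume "pleq p q" then show "f p q ` {0} \<subseteq> {0}" using f0 by simp
  qed
  have "\<exists>N\<in>Sys. \<forall>N'\<in>Sys. R N N' \<longrightarrow> N' = N"
  proof (rule predicate_Zorn)
    show "partial_order_on Sys (relation_of R Sys)"
    proof (rule partial_order_on_relation_ofI)
      show "\<And>a. a \<in> Sys \<Longrightarrow> R a a" by (simp add: R_def)
      show "\<And>a b c. R a b \<Longrightarrow> R b c \<Longrightarrow> R a c" unfolding R_def by blast
      show "\<And>a b. R a b \<Longrightarrow> R b a \<Longrightarrow> a = b" unfolding R_def by (rule ext) blast
    qed
  next
    fix CC assume CC: "CC \<in> Chains (relation_of R Sys)"
    show "\<exists>u\<in>Sys. \<forall>a\<in>CC. R a u"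
    proof (cases "CC = {}")
      case True then show ?thesis using zS by blast
    next
      case False
      have CCS: "CC \<subseteq> Sys" using CC False unfolding Chains_def relation_of_def by blast
      have CCc: "\<And>a b. a \<in> CC \<Longrightarrow> b \<in> CC \<Longrightarrow> R a b \<or> R b a"
        using CC unfolding Chains_def relation_of_def by blast
      have mem: "N \<in> Sys" if "N \<in> CC" for N using CCS that by blast
      define u where "u = (\<lambda>q. \<Union>N\<in>CC. N q)"
      obtain N0 where N0: "N0 \<in> CC" using False by blast
      have "u \<in> Sys"
        unfolding Sys_def submod_def
      proof (intro CollectI conjI allI impI)
        fix p :: "'s \<times> 't"
        show "u p \<subseteq> V p"
        proof
          fix x assume "x \<in> u p"
          then obtain N where "N \<in> CC" "x \<in> N p" by (auto simp: u_def)
          then show "x \<in> V p" using mem[of N] unfolding Sys_def submod_def by blast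
        qed
        show "vs.subspace (u p)"
        proof (rule vs.subspaceI)
          have "vs.subspace (N0 p)" using mem[OF N0] unfolding Sys_def submod_def by blast
          then have "0 \<in> N0 p" by (rule vs.subspace_0)
          then show "0 \<in> u p" using N0 by (auto simp: u_def)
        next
          fix x y assume "x \<in> u p" "y \<in> u p"
          then obtain N N' where NN: "N \<in> CC" "x \<in> N p" "N' \<in> CC" "y \<in> N' p" by (auto simp: u_def)
          have "\<exists>M\<in>CC. x \<in> M p \<and> y \<in> M p"
          proof (cases "R N N'")
            case True then show ?thesis using NN unfolding R_def by blast
          next
            case False then have "R N' N" using CCc[OF NN(1,3)] by blast
            then show ?thesis using NN unfolding R_def by blast
          qed
          then obtain M where M: "M \<in> CC" "x \<in> M p" "y \<in> M p" by blast
          have "vs.subspace (M p)" using mem[OF M(1)] unfolding Sys_def submod_def by blast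
          then have "x + y \<in> M p" using M vs.subspace_add by blast
          then show "x + y \<in> u p" using M(1) by (auto simp: u_def)
        next
          fix c x assume "x \<in> u p"
          then obtain N where N: "N \<in> CC" "x \<in> N p" by (auto simp: u_def)
          have "vs.subspace (N p)" using mem[OF N(1)] unfolding Sys_def submod_def by blast
          then have "sc c x \<in> N p" using N vs.subspace_scale by blast
          then show "sc c x \<in> u p" using N(1) by (auto simp: u_def)
        qed
        show "u p \<inter> N1 e p = {0}"
        proof
          show "u p \<inter> N1 e p \<subseteq> {0}"
          proof
            fix x assume "x \<in> u p \<inter> N1 e p"
            then obtain N where "N \<in> CC" "x \<in> N p" "x \<in> N1 e p" by (auto simp: u_def)
            moreover have "N p \<inter> N1 e p = {0}" using mem[OF \<open>N \<in> CC\<close>] unfolding Sys_def by blast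
            ultimately show "x \<in> {0}" by blast
          qed
          have "vs.subspace (N0 p)" using mem[OF N0] unfolding Sys_def submod_def by blast
          then have "0 \<in> N0 p" by (rule vs.subspace_0)
          then have "0 \<in> u p" using N0 by (auto simp: u_def)
          moreover have "0 \<in> N1 e p" using N1sc[of 0 p] by simp
          ultimately show "{0} \<subseteq> u p \<inter> N1 e p" by blast
        qed
      next
        fix p q :: "'s \<times> 't" assume pq: "pleq p q"
        show "f p q ` u p \<subseteq> u q"
        proof
          fix y assume "y \<in> f p q ` u p"
          then obtain x N where N: "N \<in> CC" "x \<in> N p" "y = f p q x" by (auto simp: u_def)
          have "f p q ` N p \<subseteq> N q" using mem[OF N(1)] pq unfolding Sys_def submod_def by blast
          then have "y \<in> N q" using N by blast
          then show "y \<in> u q" using N(1) by (auto simp: u_def)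
        qed
      qed
      moreover have "\<forall>a\<in>CC. R a u" unfolding R_def u_def by blast
      ultimately show ?thesis by blast
    qed
  qed
  then obtain N2 where N2S: "N2 \<in> Sys" and N2max: "\<And>N'. N' \<in> Sys \<Longrightarrow> R N2 N' \<Longrightarrow> N' = N2" by blast
  have N2m: "submod sc V f N2" and N2i: "\<And>q. N2 q \<inter> N1 e q = {0}" using N2S unfolding Sys_def by blast+
  have N2V: "N2 q \<subseteq> V q" for q using N2m unfolding submod_def by blast
  have N2s: "vs.subspace (N2 q)" for q using N2m unfolding submod_def by blast
  have N2f: "pleq p q \<Longrightarrow> x \<in> N2 p \<Longrightarrow> f p q x \<in> N2 q" for p q x
    using N2m unfolding submod_def by blast
  have N2z: "x \<in> N2 q \<Longrightarrow> sc c (e q) = x \<Longrightarrow> x = 0" for x q c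
    using N2i[of q] N1sc[of c q] by blast
  have full: "\<exists>a\<in>N1 e q. \<exists>b\<in>N2 q. w = a + b" if w: "w \<in> V q" for q w
  proof (rule ccontr)
    assume nd: "\<not> (\<exists>a\<in>N1 e q. \<exists>b\<in>N2 q. w = a + b)"
    have "\<exists>t. \<forall>r c n. pleq q r \<longrightarrow> e r \<noteq> 0 \<longrightarrow> n \<in> N2 r \<longrightarrow> f q r w = sc c (e r) + n \<longrightarrow> c = t"
    proof (cases "\<exists>r c n. pleq q r \<and> e r \<noteq> 0 \<and> n \<in> N2 r \<and> f q r w = sc c (e r) + n")
      case False then show ?thesis by blast
    next
      case True
      then obtain r0 c0 n0 where r0: "pleq q r0" "e r0 \<noteq> 0" "n0 \<in> N2 r0" "f q r0 w = sc c0 (e r0) + n0"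
        by blast
      show ?thesis
      proof (intro exI allI impI)
        fix r c n assume r: "pleq q r" "e r \<noteq> 0" "n \<in> N2 r" "f q r w = sc c (e r) + n"
        define mx where "mx = (max (fst r0) (fst r), max (snd r0) (snd r))"
        have emx: "e mx \<noteq> 0" unfolding mx_def by (rule supc[OF r0(2) r(2)])
        have p1: "pleq r0 mx" "pleq r mx" by (auto simp: mx_def pleq_def)
        have n0V: "n0 \<in> V r0" and nV: "n \<in> V r" using r0(3) r(3) N2V by blast+
        have "f q mx w = f r0 mx (f q r0 w)" using fcomp[OF r0(1) p1(1) w] by simp
        also have "\<dots> = sc c0 (e mx) + f r0 mx n0"
          using fadd[OF p1(1) Vscale[OF eV] n0V] fscale[OF p1(1) eV] ecomp[OF p1(1)] r0(4) by simp
        finally have A: "f q mx w = sc c0 (e mx) + f r0 mx n0" .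
        have "f q mx w = f r mx (f q r w)" using fcomp[OF r(1) p1(2) w] by simp
        also have "\<dots> = sc c (e mx) + f r mx n"
          using fadd[OF p1(2) Vscale[OF eV] nV] fscale[OF p1(2) eV] ecomp[OF p1(2)] r(4) by simp
        finally have B: "f q mx w = sc c (e mx) + f r mx n" .
        have "sc (c - c0) (e mx) = f r0 mx n0 - f r mx n"
          using A B by (simp add: vs.scale_left_diff_distrib algebra_simps)
        moreover have "f r0 mx n0 - f r mx n \<in> N2 mx"
          using vs.subspace_diff[OF N2s N2f[OF p1(1) r0(3)] N2f[OF p1(2) r(3)]] .
        ultimately have "sc (c - c0) (e mx) = 0" using N2z by metis
        then show "c = c0" using emx by simp
      qed
    qed
    then obtain t where t: "\<And>r c n. pleq q r \<Longrightarrow> e r \<noteq> 0 \<Longrightarrow> n \<in> N2 r \<Longrightarrow> f q r w = sc c (e r) + n \<Longrightarrow> c = t"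
      by blast
    define w' where "w' = w - sc t (e q)"
    have w'V: "w' \<in> V q" unfolding w'_def using Vdiff[OF w Vscale[OF eV]] .
    have fw': "f q r w' = f q r w - sc t (e r)" if "pleq q r" for r
      unfolding w'_def using fdiff[OF that w Vscale[OF eV]] fscale[OF that eV] ecomp[OF that] by simp
    have w'n: "w' \<notin> N2 q"
    proof
      assume "w' \<in> N2 q"
      moreover have "w = sc t (e q) + w'" by (simp add: w'_def)
      ultimately show False using nd N1sc by blast
    qed
    define G where "G = (\<lambda>r. if pleq q r then {n + sc s (f q r w') |n s. n \<in> N2 r} else N2 r)"
    have Gin: "n + sc s (f q r w') \<in> G r" if "pleq q r" "n \<in> N2 r" for r n s
      using that unfolding G_def by auto
    have Gout: "\<exists>n s. n \<in> N2 r \<and> x = n + sc s (f q r w')" if "pleq q r" "x \<in> G r" for r x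
      using that unfolding G_def by auto
    have Gno: "G r = N2 r" if "\<not> pleq q r" for r using that unfolding G_def by simp
    have N2G: "N2 r \<subseteq> G r" for r
    proof
      fix x assume "x \<in> N2 r"
      then show "x \<in> G r"
      proof (cases "pleq q r")
        case True
        show ?thesis using Gin[OF True \<open>x \<in> N2 r\<close>, of 0] by simp
      qed (simp add: Gno)
    qed
    have "G \<in> Sys"
      unfolding Sys_def submod_def
    proof (intro CollectI conjI allI impI)
      fix r :: "'s \<times> 't"
      show "G r \<subseteq> V r"
      proof (cases "pleq q r")
        case True
        show ?thesis
        proof
          fix x assume "x \<in> G r"
          then obtain n s where "n \<in> N2 r" "x = n + sc s (f q r w')" using Gout[OF True] by blast
          then show "x \<in> V r" using Vadd Vscale fV[OF True w'V] N2V by blast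
        qed
      qed (simp add: Gno N2V)
      show "vs.subspace (G r)"
      proof (cases "pleq q r")
        case True
        show ?thesis
        proof (rule vs.subspaceI)
          show "0 \<in> G r" using Gin[OF True vs.subspace_0[OF N2s], of 0] by simp
        next
          fix x y assume "x \<in> G r" "y \<in> G r"
          then obtain n1 s1 n2 s2 where "n1 \<in> N2 r" "x = n1 + sc s1 (f q r w')"
              "n2 \<in> N2 r" "y = n2 + sc s2 (f q r w')" using Gout[OF True] by blast
          moreover have "n1 + sc s1 (f q r w') + (n2 + sc s2 (f q r w')) = (n1 + n2) + sc (s1 + s2) (f q r w')"
            by (simp add: vs.scale_left_distrib algebra_simps)
          moreover have "n1 + n2 \<in> N2 r" using calculation vs.subspace_add[OF N2s] by blast
          ultimately show "x + y \<in> G r" using Gin[OF True] by metis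
        next
          fix c x assume "x \<in> G r"
          then obtain n s where "n \<in> N2 r" "x = n + sc s (f q r w')" using Gout[OF True] by blast
          moreover have "sc c (n + sc s (f q r w')) = sc c n + sc (c * s) (f q r w')"
            by (simp add: vs.scale_right_distrib)
          moreover have "sc c n \<in> N2 r" using calculation vs.subspace_scale[OF N2s] by blast
          ultimately show "sc c x \<in> G r" using Gin[OF True] by metis
        qed
      qed (simp add: Gno N2s)
      show "G r \<inter> N1 e r = {0}"
      proof
        have "0 \<in> N2 r" using vs.subspace_0[OF N2s] .
        then have "0 \<in> G r" using N2G by blast
        then show "{0} \<subseteq> G r \<inter> N1 e r" using N1sc[of 0 r] by simp
      next
        show "G r \<inter> N1 e r \<subseteq> {0}"
        proof
          fix x assume x: "x \<in> G r \<inter> N1 e r"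
          then obtain d where d: "x = sc d (e r)" by (auto simp: N1_def)
          show "x \<in> {0}"
          proof (cases "pleq q r")
            case False
            then have "x \<in> N2 r" using x Gno by simp
            then show ?thesis using N2z d by blast
          next
            case True
            then obtain n s where ns: "n \<in> N2 r" "x = n + sc s (f q r w')" using Gout[OF True] x by blast
            show ?thesis
            proof (cases "e r = 0")
              case True then show ?thesis using d by simp
            next
              case er: False
              show ?thesis
              proof (cases "s = 0")
                case True then have "x = n" using ns by simp
                then have "x \<in> N2 r" using ns(1) by simp
                then show ?thesis using N2z d by blast
              next
                case False
                have nV: "n \<in> V r" using ns N2V by blast
                have fwV: "f q r w \<in> V r" using fV[OF True w] .
                have "sc s (f q r w') = sc d (e r) - n" using ns d by (simp add: algebra_simps)
                then have h1: "sc s (f q r w') = sc d (e r) - n" .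
                have y1: "f q r w' = sc (inverse s) (sc d (e r) - n)"
                proof -
                  have "f q r w' = sc (inverse s) (sc s (f q r w'))" using False by simp
                  also have "\<dots> = sc (inverse s) (sc d (e r) - n)" using h1 by simp
                  finally show ?thesis .
                qed
                have "f q r w = f q r w' + sc t (e r)" using fw'[OF True] by simp
                also have "\<dots> = sc (inverse s) (sc d (e r)) - sc (inverse s) n + sc t (e r)"
                  using y1 by (simp add: vs.scale_right_diff_distrib)
                also have "\<dots> = sc (t + d / s) (e r) + sc (- inverse s) n"
                  by (simp add: vs.scale_left_distrib divide_inverse algebra_simps)
                finally have "f q r w = sc (t + d / s) (e r) + sc (- inverse s) n" .
                moreover have "sc (- inverse s) n \<in> N2 r" using vs.subspace_scale[OF N2s ns(1)] .
                ultimately have "t + d / s = t" using t[OF True er] by blast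
                then have "d = 0" using False by simp
                then show ?thesis using d by simp
              qed
            qed
          qed
        qed
      qed
    next
      fix r r' :: "'s \<times> 't" assume rr: "pleq r r'"
      show "f r r' ` G r \<subseteq> G r'"
      proof
        fix y assume "y \<in> f r r' ` G r"
        then obtain x where x: "x \<in> G r" "y = f r r' x" by blast
        show "y \<in> G r'"
        proof (cases "pleq q r")
          case True
          have qr': "pleq q r'" using pleq_trans[OF True rr] .
          obtain n s where ns: "n \<in> N2 r" "x = n + sc s (f q r w')" using x Gout[OF True] by blast
          have "y = f r r' n + sc s (f q r' w')"
            using x(2) ns fadd[OF rr] fscale[OF rr] fV[OF True w'V] N2V fcomp[OF True rr w'V] Vscale
            by (metis subsetD)
          moreover have "f r r' n \<in> N2 r'" using N2f[OF rr ns(1)] .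
          ultimately show ?thesis using Gin[OF qr'] by metis
        next
          case False
          then have "x \<in> N2 r" using x Gno by simp
          then show ?thesis using N2f[OF rr] N2G x(2) by blast
        qed
      qed
    qed
    moreover have "R N2 G" unfolding R_def using N2G by blast
    ultimately have "G = N2" using N2max by blast
    moreover have "w' \<in> G q"
    proof -
      have "w' = 0 + sc 1 (f q q w')" using fid[OF w'V] by simp
      then show ?thesis using Gin[OF pleq_refl vs.subspace_0[OF N2s], of 1] by simp
    qed
    ultimately show False using w'n by simp
  qed
  have "\<not> nonzero_mod (N1 e) \<or> \<not> nonzero_mod N2"
    using ind unfolding indecomposable_def
  proof (elim conjE allE impE)
    show "submod sc V f (N1 e) \<and> submod sc V f N2 \<and>
        (\<forall>p. N1 e p \<inter> N2 p = {0} \<and> (\<forall>v\<in>V p. \<exists>a\<in>N1 e p. \<exists>b\<in>N2 p. v = a + b))"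
      using N1m N2m N2i full by blast
  qed
  moreover have "nonzero_mod (N1 e)"
  proof -
    have "e p0 \<in> N1 e p0" using N1sc[of 1 p0] by simp
    then have "N1 e p0 \<noteq> {0}" using ne by blast
    then show ?thesis unfolding nonzero_mod_def by blast
  qed
  ultimately have N2zero: "N2 q = {0}" for q
    using vs.subspace_0[OF N2s] unfolding nonzero_mod_def by blast
  show "V q = N1 e q"
  proof
    show "V q \<subseteq> N1 e q"
    proof
      fix w assume "w \<in> V q"
      then obtain a b where "a \<in> N1 e q" "b \<in> N2 q" "w = a + b" using full by blast
      then show "w \<in> N1 e q" using N2zero[of q] by simp
    qed
    show "N1 e q \<subseteq> V q" by (rule N1V)
  qed
qed


lemma final_iso:
  assumes eV: "\<And>q. e q \<in> V q" and ecomp: "\<And>p q. pleq p q \<Longrightarrow> f p q (e p) = e q"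
    and Vspan: "\<And>q. V q = N1 e q"
    and BJ: "{q. e q \<noteq> 0} = JS \<times> JT" and dS: "down_closed JS" and dT: "down_closed JT"
  shows "\<exists>B. db_block B \<and> pmod_iso sc V f ((*) :: 'k \<Rightarrow> 'k \<Rightarrow> 'k) (kB_space B) (kB_map B)"
proof -
  define B where "B = {q. e q \<noteq> 0}"
  have dbB: "db_block B" unfolding db_block_def B_def using BJ dS dT by blast
  define \<phi> where "\<phi> = (\<lambda>q w. if e q \<noteq> 0 then (SOME c. w = sc c (e q)) else (0::'k))"
  have phi_sc: "\<phi> q (sc c (e q)) = c" if "e q \<noteq> 0" for q c
  proof -
    have "(SOME c'. sc c (e q) = sc c' (e q)) = c"
    proof (rule some_equality)
      fix c' assume "sc c (e q) = sc c' (e q)"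
      then show "c' = c" using that by simp
    qed simp
    then show ?thesis using that by (simp add: \<phi>_def)
  qed
  have phi_z: "\<phi> q w = 0" if "e q = 0" for q w using that by (simp add: \<phi>_def)
  have Vform: "\<exists>c. w = sc c (e q)" if "w \<in> V q" for w q
    using that Vspan[of q] unfolding N1_def by blast
  have V0e: "V q = {0}" if "e q = 0" for q
    using Vspan[of q] that unfolding N1_def by auto
  have kBs: "(kB_space B q :: 'k set) = (if e q \<noteq> 0 then UNIV else {0})" for q
    by (simp add: kB_space_def B_def)
  have "pmod_iso sc V f ((*) :: 'k \<Rightarrow> 'k \<Rightarrow> 'k) (kB_space B) (kB_map B)"
    unfolding pmod_iso_def
  proof (intro exI[of _ \<phi>] conjI allI impI ballI)
    fix q :: "'s \<times> 't"
    show "bij_betw (\<phi> q) (V q) (kB_space B q)"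
    proof (cases "e q = 0")
      case True
      then show ?thesis using V0e[OF True] phi_z[OF True] kBs[of q] by (simp add: bij_betw_def)
    next
      case False
      have inj: "inj_on (\<phi> q) (V q)"
      proof (rule inj_onI)
        fix x y assume "x \<in> V q" "y \<in> V q" "\<phi> q x = \<phi> q y"
        then obtain a b where "x = sc a (e q)" "y = sc b (e q)" using Vform by blast
        then show "x = y" using \<open>\<phi> q x = \<phi> q y\<close> phi_sc[OF False] by simp
      qed
      have "\<phi> q ` V q = UNIV"
      proof (rule set_eqI, rule iffI)
        fix c :: 'k assume "c \<in> UNIV"
        have "sc c (e q) \<in> V q" using Vscale[OF eV] .
        then show "c \<in> \<phi> q ` V q" using phi_sc[OF False, of c] by (metis image_eqI)
      qed simp
      then show ?thesis using inj kBs[of q] False by (simp add: bij_betw_def)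
    qed
    show "lin_on sc (*) (V q) (\<phi> q)"
      unfolding lin_on_def
    proof (intro conjI ballI allI)
      fix x y assume "x \<in> V q" "y \<in> V q"
      then obtain a b where ab: "x = sc a (e q)" "y = sc b (e q)" using Vform by blast
      show "\<phi> q (x + y) = \<phi> q x + \<phi> q y"
      proof (cases "e q = 0")
        case True then show ?thesis using phi_z by simp
      next
        case False
        have "x + y = sc (a + b) (e q)" using ab by (simp add: vs.scale_left_distrib)
        then show ?thesis using ab phi_sc[OF False] by simp
      qed
    next
      fix c :: 'k and x assume "x \<in> V q"
      then obtain a where a: "x = sc a (e q)" using Vform by blast
      show "\<phi> q (sc c x) = c * \<phi> q x"
      proof (cases "e q = 0")
        case True then show ?thesis using phi_z by simp
      next
        case False
        have "sc c x = sc (c * a) (e q)" using a by simp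
        then show ?thesis using a phi_sc[OF False] by simp
      qed
    qed
  next
    fix p q :: "'s \<times> 't" and v assume pq: "pleq p q" and v: "v \<in> V p"
    obtain a where a: "v = sc a (e p)" using Vform[OF v] by blast
    have fv: "f p q v = sc a (e q)" using a fscale[OF pq eV] ecomp[OF pq] by simp
    show "\<phi> q (f p q v) = kB_map B p q (\<phi> p v)"
    proof (cases "e p = 0")
      case True
      then have "e q = 0" using ecomp[OF pq] f0[OF pq] by simp
      then show ?thesis using True by (simp add: phi_z kB_map_def B_def)
    next
      case ep: False
      show ?thesis
      proof (cases "e q = 0")
        case True then show ?thesis by (simp add: phi_z kB_map_def B_def)
      next
        case False
        then show ?thesis using ep fv a phi_sc by (simp add: kB_map_def B_def)
      qed
    qed
  qed
  then show ?thesis using dbB by blast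
qed


lemma case1:
  assumes pf: "pfd sc V"
    and ex: "\<And>x x' y y'. x \<le> x' \<Longrightarrow> y \<le> y' \<Longrightarrow> square_exact V f x x' y y'"
    and vl: "v \<in> im_left V f p" and vr: "v \<in> ker_right V f p" and v0: "v \<noteq> 0"
  shows "\<exists>e JS. (\<forall>q. e q \<in> V q) \<and> (\<forall>p q. pleq p q \<longrightarrow> f p q (e p) = e q) \<and> e p \<noteq> 0
     \<and> down_closed JS \<and> {q. e q \<noteq> 0} = JS \<times> UNIV"
proof -
  obtain a b where p: "p = (a, b)" by (cases p)
  obtain c where c: "a \<le> c" "v \<in> V p" "f p (c, b) v = 0"
    using vr unfolding ker_right_def p by auto
  have vl': "v \<in> f (x, b) p ` V (x, b)" if "x \<le> a" for x
    using vl that unfolding im_left_def p by auto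
  define P where "P = (\<lambda>q. {w \<in> V q. f q p w = v \<and> f q (c, snd q) w = 0})"
  define I where "I = {q. pleq q p}"
  have qc: "pleq q (c, snd q)" if "q \<in> I" for q
    using that c(1) unfolding I_def pleq_def p by auto
  have Pne: "\<exists>w. w \<in> P q" if "q \<in> I" for q
  proof -
    obtain x y where q: "q = (x, y)" by (cases q)
    have xy: "x \<le> a" "y \<le> b" using that unfolding I_def q p pleq_def by auto
    obtain w where w: "w \<in> V (x, b)" "f (x, b) p w = v" using vl'[OF xy(1)] by blast
    have pl1: "pleq (x, b) p" "pleq p (c, b)" using xy c(1) unfolding p pleq_def by auto
    have "f (x, b) (c, b) w = f p (c, b) (f (x, b) p w)" using fcomp[OF pl1 w(1)] by simp
    then have gw: "f (x, b) (c, b) w = 0" using w(2) c(3) by simp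
    have sq: "square_exact V f x c y b" using ex xy c(1) by simp
    have "\<exists>u\<in>V (x, y). w = f (x, y) (x, b) u \<and> 0 = f (x, y) (c, y) u"
      using sq w(1) V0[of "(c, y)"] gw f0[of "(c, y)" "(c, b)"] xy
      unfolding square_exact_def Let_def pleq_def by auto
    then obtain u where u: "u \<in> V (x, y)" "w = f (x, y) (x, b) u" "0 = f (x, y) (c, y) u" by blast
    have pl2: "pleq (x, y) (x, b)" using xy unfolding pleq_def by auto
    have "f (x, y) p u = v" using fcomp[OF pl2 pl1(1) u(1)] u(2) w(2) by simp
    then have "u \<in> P q" using u unfolding P_def q by simp
    then show ?thesis by blast
  qed
  have "\<exists>s. \<forall>i\<in>I. s i \<in> P i \<and> (\<forall>j\<in>I. pleq j i \<longrightarrow> f j i (s j) = s i)"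
  proof (rule vs.IL_aff[where W=V])
    show "\<And>i. i \<in> I \<Longrightarrow> pleq i i" by simp
    show "\<And>i j k. i \<in> I \<Longrightarrow> j \<in> I \<Longrightarrow> k \<in> I \<Longrightarrow> pleq j i \<Longrightarrow> pleq k j \<Longrightarrow> pleq k i"
      using pleq_trans by blast
    show "\<exists>k\<in>I. pleq k i \<and> pleq k j" if "i \<in> I" "j \<in> I" for i j
    proof (intro bexI conjI)
      let ?k = "(min (fst i) (fst j), min (snd i) (snd j))"
      show "pleq ?k i" "pleq ?k j" by (auto simp: pleq_def)
      show "?k \<in> I" using that unfolding I_def pleq_def by (auto simp: min_le_iff_disj)
    qed
    show "\<And>i. i \<in> I \<Longrightarrow> vs.subspace (V i)" using Vsub by blast
    show "\<exists>F. finite F \<and> V i \<subseteq> vs.span F" for i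
      using pf unfolding pfd_def by (metis order_refl)
    show "\<And>i j x. i \<in> I \<Longrightarrow> j \<in> I \<Longrightarrow> pleq j i \<Longrightarrow> x \<in> V j \<Longrightarrow> f j i x \<in> V i" using fV by blast
    show "\<And>i j x y. i \<in> I \<Longrightarrow> j \<in> I \<Longrightarrow> pleq j i \<Longrightarrow> x \<in> V j \<Longrightarrow> y \<in> V j
        \<Longrightarrow> f j i (x + y) = f j i x + f j i y" using fadd by blast
    show "\<And>i j c x. i \<in> I \<Longrightarrow> j \<in> I \<Longrightarrow> pleq j i \<Longrightarrow> x \<in> V j \<Longrightarrow> f j i (sc c x) = sc c (f j i x)"
      using fscale by blast
    show "\<And>i x. i \<in> I \<Longrightarrow> x \<in> V i \<Longrightarrow> f i i x = x" using fid by blast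
    show "\<And>i j k x. i \<in> I \<Longrightarrow> j \<in> I \<Longrightarrow> k \<in> I \<Longrightarrow> pleq j i \<Longrightarrow> pleq k j \<Longrightarrow> x \<in> V k
        \<Longrightarrow> f j i (f k j x) = f k i x" using fcomp by blast
  next
    fix i assume i: "i \<in> I"
    obtain w0 where w0: "w0 \<in> P i" using Pne[OF i] by blast
    define U where "U = {u \<in> V i. f i p u = 0 \<and> f i (c, snd i) u = 0}"
    have ip: "pleq i p" using i by (simp add: I_def)
    have ic: "pleq i (c, snd i)" using qc[OF i] .
    have w0': "w0 \<in> V i" "f i p w0 = v" "f i (c, snd i) w0 = 0" using w0 by (auto simp: P_def)
    show "vs.vaff (V i) (P i)"
      unfolding vs.vaff_def
    proof (intro exI conjI)
      show "vs.subspace U"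
      proof (rule vs.subspaceI)
        show "0 \<in> U" using V0 f0[OF ip] f0[OF ic] by (simp add: U_def)
        show "x + y \<in> U" if "x \<in> U" "y \<in> U" for x y
          using that Vadd fadd[OF ip] fadd[OF ic] by (simp add: U_def)
        show "sc c' x \<in> U" if "x \<in> U" for c' x
          using that Vscale fscale[OF ip] fscale[OF ic] by (simp add: U_def)
      qed
      show "U \<subseteq> V i" by (auto simp: U_def)
      show "w0 \<in> V i" by fact
      show "P i = (\<lambda>u. w0 + u) ` U"
      proof (rule set_eqI, rule iffI)
        fix w assume "w \<in> P i"
        then have w: "w \<in> V i" "f i p w = v" "f i (c, snd i) w = 0" by (auto simp: P_def)
        have "w - w0 \<in> U" using w w0' Vdiff fdiff[OF ip] fdiff[OF ic] by (simp add: U_def)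
        moreover have "w = w0 + (w - w0)" by simp
        ultimately show "w \<in> (\<lambda>u. w0 + u) ` U" by blast
      next
        fix w assume "w \<in> (\<lambda>u. w0 + u) ` U"
        then obtain u where u: "u \<in> V i" "f i p u = 0" "f i (c, snd i) u = 0" "w = w0 + u"
          by (auto simp: U_def)
        show "w \<in> P i" using u w0' Vadd fadd[OF ip] fadd[OF ic] by (simp add: P_def)
      qed
    qed
  next
    fix i j x assume ij: "i \<in> I" "j \<in> I" "pleq j i" and x: "x \<in> P j"
    have x': "x \<in> V j" "f j p x = v" "f j (c, snd j) x = 0" using x by (auto simp: P_def)
    have ip: "pleq i p" using ij by (simp add: I_def)
    have "f i p (f j i x) = v" using fcomp[OF ij(3) ip x'(1)] x'(2) by simp
    moreover have "f i (c, snd i) (f j i x) = 0"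
    proof -
      have jc: "pleq j (c, snd j)" using qc[OF ij(2)] .
      have cc: "pleq (c, snd j) (c, snd i)" using ij(3) by (auto simp: pleq_def)
      have "f i (c, snd i) (f j i x) = f j (c, snd i) x" using fcomp[OF ij(3) qc[OF ij(1)] x'(1)] .
      also have "\<dots> = f (c, snd j) (c, snd i) (f j (c, snd j) x)" using fcomp[OF jc cc x'(1)] by simp
      also have "\<dots> = 0" using x'(3) f0[OF cc] by simp
      finally show ?thesis .
    qed
    ultimately show "f j i x \<in> P i" using fV[OF ij(3) x'(1)] by (simp add: P_def)
  qed
  then obtain s where s: "\<And>i. i \<in> I \<Longrightarrow> s i \<in> P i"
    "\<And>i j. i \<in> I \<Longrightarrow> j \<in> I \<Longrightarrow> pleq j i \<Longrightarrow> f j i (s j) = s i" by blast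
  define m where "m = (\<lambda>r::'s \<times> 't. (min (fst r) a, min (snd r) b))"
  have mI: "m r \<in> I" for r by (auto simp: m_def I_def pleq_def p min_le_iff_disj)
  have mr: "pleq (m r) r" for r by (auto simp: m_def pleq_def min_le_iff_disj)
  have mmono: "pleq r r' \<Longrightarrow> pleq (m r) (m r')" for r r' by (auto simp: m_def pleq_def min_le_iff_disj)
  have sV: "s i \<in> V i" if "i \<in> I" for i using s(1)[OF that] by (simp add: P_def)
  define e where "e = (\<lambda>r. f (m r) r (s (m r)))"
  have eV: "e r \<in> V r" for r unfolding e_def using fV[OF mr sV[OF mI]] .
  have ecomp: "f r r' (e r) = e r'" if rr: "pleq r r'" for r r'
  proof -
    have "e r' = f (m r') r' (f (m r) (m r') (s (m r)))"
      unfolding e_def using s(2)[OF mI mI mmono[OF rr]] by simp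
    also have "\<dots> = f (m r) r' (s (m r))" using fcomp[OF mmono[OF rr] mr sV[OF mI]] .
    also have "\<dots> = f r r' (f (m r) r (s (m r)))" using fcomp[OF mr rr sV[OF mI]] by simp
    finally show ?thesis unfolding e_def by simp
  qed
  have mp: "m p = p" using c(1) by (simp add: m_def p)
  have ep: "e p = v"
  proof -
    have "p \<in> I" by (simp add: I_def)
    then have "s p \<in> P p" by (rule s(1))
    then have "f p p (s p) = v" "s p \<in> V p" by (auto simp: P_def)
    then show ?thesis unfolding e_def mp using fid by simp
  qed
  have dies: "f r (max c (fst r), snd r) (e r) = 0" for r
  proof -
    obtain x y where r: "r = (x, y)" by (cases r)
    let ?mr = "m r"
    have mc: "pleq ?mr (c, snd ?mr)" using qc[OF mI] .
    have c2: "pleq (c, snd ?mr) (max c (fst r), snd r)" by (auto simp: m_def pleq_def min_le_iff_disj)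
    have r2: "pleq r (max c (fst r), snd r)" by (auto simp: pleq_def)
    have "f r (max c (fst r), snd r) (e r) = f ?mr (max c (fst r), snd r) (s ?mr)"
      unfolding e_def using fcomp[OF mr r2 sV[OF mI]] .
    also have "\<dots> = f (c, snd ?mr) (max c (fst r), snd r) (f ?mr (c, snd ?mr) (s ?mr))"
      using fcomp[OF mc c2 sV[OF mI]] by simp
    also have "\<dots> = 0" using s(1)[OF mI] f0[OF c2] by (simp add: P_def)
    finally show ?thesis .
  qed
  have vinv: "e (x, y') \<noteq> 0" if "e (x, y) \<noteq> 0" for x y y'
  proof (cases "y' \<le> y")
    case True
    have "pleq (x, y') (x, y)" using True by (simp add: pleq_def)
    then have "e (x, y) = f (x, y') (x, y) (e (x, y'))" using ecomp by simp
    then show ?thesis using that f0[of "(x, y')" "(x, y)"] True by (auto simp: pleq_def)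
  next
    case False
    then have yy: "y \<le> y'" by simp
    let ?c = "max c x"
    have sq: "square_exact V f x ?c y y'" using ex yy by simp
    have "f (x, y) (x, y') (e (x, y)) = e (x, y')" using ecomp yy by (simp add: pleq_def)
    moreover have "f (x, y) (?c, y) (e (x, y)) = 0" using dies[of "(x, y)"] by simp
    ultimately show ?thesis using sq eV[of "(x, y)"] that unfolding square_exact_def Let_def by auto
  qed
  define JS where "JS = {x. e (x, b) \<noteq> 0}"
  have dJS: "down_closed JS"
    unfolding down_closed_def
  proof (intro conjI ballI allI impI)
    show "JS \<noteq> {}" using ep v0 p by (auto simp: JS_def)
  next
    fix x x' assume "x \<in> JS" "x' \<le> x"
    then have "e (x, b) \<noteq> 0" by (simp add: JS_def)
    moreover have "e (x, b) = f (x', b) (x, b) (e (x', b))" using ecomp \<open>x' \<le> x\<close> by (simp add: pleq_def)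
    ultimately show "x' \<in> JS" using f0[of "(x', b)" "(x, b)"] \<open>x' \<le> x\<close> by (auto simp: JS_def pleq_def)
  qed
  have supp: "{q. e q \<noteq> 0} = JS \<times> UNIV"
  proof (rule set_eqI)
    fix q :: "'s \<times> 't"
    obtain x y where q: "q = (x, y)" by (cases q)
    show "q \<in> {q. e q \<noteq> 0} \<longleftrightarrow> q \<in> JS \<times> UNIV"
      unfolding q JS_def using vinv[of x y b] vinv[of x b y] by auto
  qed
  show ?thesis
    using eV ecomp ep v0 dJS supp by blast
qed

lemma case2:
  assumes pf: "pfd sc V"
    and ex: "\<And>x x' y y'. x \<le> x' \<Longrightarrow> y \<le> y' \<Longrightarrow> square_exact V f x x' y y'"
    and vl: "v \<in> im_down V f p" and vr: "v \<in> ker_up V f p" and v0: "v \<noteq> 0"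
  shows "\<exists>e JT. (\<forall>q. e q \<in> V q) \<and> (\<forall>p q. pleq p q \<longrightarrow> f p q (e p) = e q) \<and> e p \<noteq> 0
     \<and> down_closed JT \<and> {q. e q \<noteq> 0} = UNIV \<times> JT"
proof -
  obtain a b where p: "p = (a, b)" by (cases p)
  obtain c where c: "b \<le> c" "v \<in> V p" "f p (a, c) v = 0"
    using vr unfolding ker_up_def p by auto
  have vl': "v \<in> f (a, y) p ` V (a, y)" if "y \<le> b" for y
    using vl that unfolding im_down_def p by auto
  define P where "P = (\<lambda>q. {w \<in> V q. f q p w = v \<and> f q (fst q, c) w = 0})"
  define I where "I = {q. pleq q p}"
  have qc: "pleq q (fst q, c)" if "q \<in> I" for q
    using that c(1) unfolding I_def pleq_def p by auto
  have Pne: "\<exists>w. w \<in> P q" if "q \<in> I" for q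
  proof -
    obtain x y where q: "q = (x, y)" by (cases q)
    have xy: "x \<le> a" "y \<le> b" using that unfolding I_def q p pleq_def by auto
    obtain w where w: "w \<in> V (a, y)" "f (a, y) p w = v" using vl'[OF xy(2)] by blast
    have pl1: "pleq (a, y) p" "pleq p (a, c)" using xy c(1) unfolding p pleq_def by auto
    have "f (a, y) (a, c) w = f p (a, c) (f (a, y) p w)" using fcomp[OF pl1 w(1)] by simp
    then have gw: "f (a, y) (a, c) w = 0" using w(2) c(3) by simp
    have sq: "square_exact V f x a y c" using ex xy c(1) by simp
    have "\<exists>u\<in>V (x, y). 0 = f (x, y) (x, c) u \<and> w = f (x, y) (a, y) u"
      using sq w(1) V0[of "(x, c)"] gw f0[of "(x, c)" "(a, c)"] xy
      unfolding square_exact_def Let_def pleq_def by auto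
    then obtain u where u: "u \<in> V (x, y)" "w = f (x, y) (a, y) u" "0 = f (x, y) (x, c) u" by blast
    have pl2: "pleq (x, y) (a, y)" using xy unfolding pleq_def by auto
    have "f (x, y) p u = v" using fcomp[OF pl2 pl1(1) u(1)] u(2) w(2) by simp
    then have "u \<in> P q" using u unfolding P_def q by simp
    then show ?thesis by blast
  qed
  have "\<exists>s. \<forall>i\<in>I. s i \<in> P i \<and> (\<forall>j\<in>I. pleq j i \<longrightarrow> f j i (s j) = s i)"
  proof (rule vs.IL_aff[where W=V])
    show "\<And>i. i \<in> I \<Longrightarrow> pleq i i" by simp
    show "\<And>i j k. i \<in> I \<Longrightarrow> j \<in> I \<Longrightarrow> k \<in> I \<Longrightarrow> pleq j i \<Longrightarrow> pleq k j \<Longrightarrow> pleq k i"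
      using pleq_trans by blast
    show "\<exists>k\<in>I. pleq k i \<and> pleq k j" if "i \<in> I" "j \<in> I" for i j
    proof (intro bexI conjI)
      let ?k = "(min (fst i) (fst j), min (snd i) (snd j))"
      show "pleq ?k i" "pleq ?k j" by (auto simp: pleq_def)
      show "?k \<in> I" using that unfolding I_def pleq_def by (auto simp: min_le_iff_disj)
    qed
    show "\<And>i. i \<in> I \<Longrightarrow> vs.subspace (V i)" using Vsub by blast
    show "\<exists>F. finite F \<and> V i \<subseteq> vs.span F" for i
      using pf unfolding pfd_def by (metis order_refl)
    show "\<And>i j x. i \<in> I \<Longrightarrow> j \<in> I \<Longrightarrow> pleq j i \<Longrightarrow> x \<in> V j \<Longrightarrow> f j i x \<in> V i" using fV by blast
    show "\<And>i j x y. i \<in> I \<Longrightarrow> j \<in> I \<Longrightarrow> pleq j i \<Longrightarrow> x \<in> V j \<Longrightarrow> y \<in> V j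
        \<Longrightarrow> f j i (x + y) = f j i x + f j i y" using fadd by blast
    show "\<And>i j c x. i \<in> I \<Longrightarrow> j \<in> I \<Longrightarrow> pleq j i \<Longrightarrow> x \<in> V j \<Longrightarrow> f j i (sc c x) = sc c (f j i x)"
      using fscale by blast
    show "\<And>i x. i \<in> I \<Longrightarrow> x \<in> V i \<Longrightarrow> f i i x = x" using fid by blast
    show "\<And>i j k x. i \<in> I \<Longrightarrow> j \<in> I \<Longrightarrow> k \<in> I \<Longrightarrow> pleq j i \<Longrightarrow> pleq k j \<Longrightarrow> x \<in> V k
        \<Longrightarrow> f j i (f k j x) = f k i x" using fcomp by blast
  next
    fix i assume i: "i \<in> I"
    obtain w0 where w0: "w0 \<in> P i" using Pne[OF i] by blast
    define U where "U = {u \<in> V i. f i p u = 0 \<and> f i (fst i, c) u = 0}"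
    have ip: "pleq i p" using i by (simp add: I_def)
    have ic: "pleq i (fst i, c)" using qc[OF i] .
    have w0': "w0 \<in> V i" "f i p w0 = v" "f i (fst i, c) w0 = 0" using w0 by (auto simp: P_def)
    show "vs.vaff (V i) (P i)"
      unfolding vs.vaff_def
    proof (intro exI conjI)
      show "vs.subspace U"
      proof (rule vs.subspaceI)
        show "0 \<in> U" using V0 f0[OF ip] f0[OF ic] by (simp add: U_def)
        show "x + y \<in> U" if "x \<in> U" "y \<in> U" for x y
          using that Vadd fadd[OF ip] fadd[OF ic] by (simp add: U_def)
        show "sc c' x \<in> U" if "x \<in> U" for c' x
          using that Vscale fscale[OF ip] fscale[OF ic] by (simp add: U_def)
      qed
      show "U \<subseteq> V i" by (auto simp: U_def)
      show "w0 \<in> V i" by fact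
      show "P i = (\<lambda>u. w0 + u) ` U"
      proof (rule set_eqI, rule iffI)
        fix w assume "w \<in> P i"
        then have w: "w \<in> V i" "f i p w = v" "f i (fst i, c) w = 0" by (auto simp: P_def)
        have "w - w0 \<in> U" using w w0' Vdiff fdiff[OF ip] fdiff[OF ic] by (simp add: U_def)
        moreover have "w = w0 + (w - w0)" by simp
        ultimately show "w \<in> (\<lambda>u. w0 + u) ` U" by blast
      next
        fix w assume "w \<in> (\<lambda>u. w0 + u) ` U"
        then obtain u where u: "u \<in> V i" "f i p u = 0" "f i (fst i, c) u = 0" "w = w0 + u"
          by (auto simp: U_def)
        show "w \<in> P i" using u w0' Vadd fadd[OF ip] fadd[OF ic] by (simp add: P_def)
      qed
    qed
  next
    fix i j x assume ij: "i \<in> I" "j \<in> I" "pleq j i" and x: "x \<in> P j"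
    have x': "x \<in> V j" "f j p x = v" "f j (fst j, c) x = 0" using x by (auto simp: P_def)
    have ip: "pleq i p" using ij by (simp add: I_def)
    have "f i p (f j i x) = v" using fcomp[OF ij(3) ip x'(1)] x'(2) by simp
    moreover have "f i (fst i, c) (f j i x) = 0"
    proof -
      have jc: "pleq j (fst j, c)" using qc[OF ij(2)] .
      have cc: "pleq (fst j, c) (fst i, c)" using ij(3) by (auto simp: pleq_def)
      have "f i (fst i, c) (f j i x) = f j (fst i, c) x" using fcomp[OF ij(3) qc[OF ij(1)] x'(1)] .
      also have "\<dots> = f (fst j, c) (fst i, c) (f j (fst j, c) x)" using fcomp[OF jc cc x'(1)] by simp
      also have "\<dots> = 0" using x'(3) f0[OF cc] by simp
      finally show ?thesis .
    qed
    ultimately show "f j i x \<in> P i" using fV[OF ij(3) x'(1)] by (simp add: P_def)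
  qed
  then obtain s where s: "\<And>i. i \<in> I \<Longrightarrow> s i \<in> P i"
    "\<And>i j. i \<in> I \<Longrightarrow> j \<in> I \<Longrightarrow> pleq j i \<Longrightarrow> f j i (s j) = s i" by blast
  define m where "m = (\<lambda>r::'s \<times> 't. (min (fst r) a, min (snd r) b))"
  have mI: "m r \<in> I" for r by (auto simp: m_def I_def pleq_def p min_le_iff_disj)
  have mr: "pleq (m r) r" for r by (auto simp: m_def pleq_def min_le_iff_disj)
  have mmono: "pleq r r' \<Longrightarrow> pleq (m r) (m r')" for r r' by (auto simp: m_def pleq_def min_le_iff_disj)
  have sV: "s i \<in> V i" if "i \<in> I" for i using s(1)[OF that] by (simp add: P_def)
  define e where "e = (\<lambda>r. f (m r) r (s (m r)))"
  have eV: "e r \<in> V r" for r unfolding e_def using fV[OF mr sV[OF mI]] .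
  have ecomp: "f r r' (e r) = e r'" if rr: "pleq r r'" for r r'
  proof -
    have "e r' = f (m r') r' (f (m r) (m r') (s (m r)))"
      unfolding e_def using s(2)[OF mI mI mmono[OF rr]] by simp
    also have "\<dots> = f (m r) r' (s (m r))" using fcomp[OF mmono[OF rr] mr sV[OF mI]] .
    also have "\<dots> = f r r' (f (m r) r (s (m r)))" using fcomp[OF mr rr sV[OF mI]] by simp
    finally show ?thesis unfolding e_def by simp
  qed
  have mp: "m p = p" using c(1) by (simp add: m_def p)
  have ep: "e p = v"
  proof -
    have "p \<in> I" by (simp add: I_def)
    then have "s p \<in> P p" by (rule s(1))
    then have "f p p (s p) = v" "s p \<in> V p" by (auto simp: P_def)
    then show ?thesis unfolding e_def mp using fid by simp
  qed
  have dies: "f r (fst r, max c (snd r)) (e r) = 0" for r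
  proof -
    obtain x y where r: "r = (x, y)" by (cases r)
    let ?mr = "m r"
    have mc: "pleq ?mr (fst ?mr, c)" using qc[OF mI] .
    have c2: "pleq (fst ?mr, c) (fst r, max c (snd r))" by (auto simp: m_def pleq_def min_le_iff_disj)
    have r2: "pleq r (fst r, max c (snd r))" by (auto simp: pleq_def)
    have "f r (fst r, max c (snd r)) (e r) = f ?mr (fst r, max c (snd r)) (s ?mr)"
      unfolding e_def using fcomp[OF mr r2 sV[OF mI]] .
    also have "\<dots> = f (fst ?mr, c) (fst r, max c (snd r)) (f ?mr (fst ?mr, c) (s ?mr))"
      using fcomp[OF mc c2 sV[OF mI]] by simp
    also have "\<dots> = 0" using s(1)[OF mI] f0[OF c2] by (simp add: P_def)
    finally show ?thesis .
  qed
  have vinv: "e (x', y) \<noteq> 0" if "e (x, y) \<noteq> 0" for x x' y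
  proof (cases "x' \<le> x")
    case True
    have "pleq (x', y) (x, y)" using True by (simp add: pleq_def)
    then have "e (x, y) = f (x', y) (x, y) (e (x', y))" using ecomp by simp
    then show ?thesis using that f0[of "(x', y)" "(x, y)"] True by (auto simp: pleq_def)
  next
    case False
    then have xx: "x \<le> x'" by simp
    let ?c = "max c y"
    have sq: "square_exact V f x x' y ?c" using ex xx by simp
    have "f (x, y) (x', y) (e (x, y)) = e (x', y)" using ecomp xx by (simp add: pleq_def)
    moreover have "f (x, y) (x, ?c) (e (x, y)) = 0" using dies[of "(x, y)"] by simp
    ultimately show ?thesis using sq eV[of "(x, y)"] that unfolding square_exact_def Let_def by auto
  qed
  define JT where "JT = {y. e (a, y) \<noteq> 0}"
  have dJT: "down_closed JT"
    unfolding down_closed_def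
  proof (intro conjI ballI allI impI)
    show "JT \<noteq> {}" using ep v0 p by (auto simp: JT_def)
  next
    fix y y' assume "y \<in> JT" "y' \<le> y"
    then have "e (a, y) \<noteq> 0" by (simp add: JT_def)
    moreover have "e (a, y) = f (a, y') (a, y) (e (a, y'))" using ecomp \<open>y' \<le> y\<close> by (simp add: pleq_def)
    ultimately show "y' \<in> JT" using f0[of "(a, y')" "(a, y)"] \<open>y' \<le> y\<close> by (auto simp: JT_def pleq_def)
  qed
  have supp: "{q. e q \<noteq> 0} = UNIV \<times> JT"
  proof (rule set_eqI)
    fix q :: "'s \<times> 't"
    obtain x y where q: "q = (x, y)" by (cases q)
    show "q \<in> {q. e q \<noteq> 0} \<longleftrightarrow> q \<in> UNIV \<times> JT"
      unfolding q JT_def using vinv[of x y a] vinv[of a y x] by auto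
  qed
  have A: "\<forall>q. e q \<in> V q" using eV by blast
  have B: "\<forall>p q. pleq p q \<longrightarrow> f p q (e p) = e q" using ecomp by blast
  have C: "e p \<noteq> 0" using ep v0 by simp
  show ?thesis
    by (intro exI[of _ e] exI[of _ JT] conjI) (fact A, fact B, fact C, fact dJT, fact supp)
qed

end


theorem lemma5p8:
  fixes sc :: "'k::field \<Rightarrow> 'v::ab_group_add \<Rightarrow> 'v"
    and V :: "'s::linorder \<times> 't::linorder \<Rightarrow> 'v set"
    and f :: "'s \<times> 't \<Rightarrow> 's \<times> 't \<Rightarrow> 'v \<Rightarrow> 'v"
  assumes "pmod sc V f"
    and "pfd sc V"
    and "indecomposable sc V f"
    and "\<And>x x' y y'. x \<le> x' \<Longrightarrow> y \<le> y' \<Longrightarrow> square_exact V f x x' y y'"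
    and "(\<exists>p. im_left V f p \<inter> ker_right V f p \<noteq> {0}) \<or>
         (\<exists>p. im_down V f p \<inter> ker_up V f p \<noteq> {0})"
  shows "\<exists>B. db_block B \<and> pmod_iso sc V f ((*) :: 'k \<Rightarrow> 'k \<Rightarrow> 'k) (kB_space B) (kB_map B)"
proof -
  note pm = assms(1)
  have pl1: "pleq (q, snd p) p" if "q \<le> fst p" for q p using that by (simp add: pleq_def)
  have pl2: "pleq (fst p, q) p" if "q \<le> snd p" for q p using that by (simp add: pleq_def)
  have z1: "0 \<in> im_left V f p \<inter> ker_right V f p" for p
  proof
    show "0 \<in> im_left V f p" unfolding im_left_def
    proof
      fix q assume "q \<in> {q. q \<le> fst p}"
      then have "f (q, snd p) p 0 = 0" using f0[OF pm pl1] by simp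
      then show "0 \<in> f (q, snd p) p ` V (q, snd p)" using V0[OF pm] by (metis image_eqI)
    qed
    have "f p (fst p, snd p) 0 = 0" using f0[OF pm, of p "(fst p, snd p)"] by (simp add: pleq_def)
    then show "0 \<in> ker_right V f p" unfolding ker_right_def using V0[OF pm, of p] by auto
  qed
  have z2: "0 \<in> im_down V f p \<inter> ker_up V f p" for p
  proof
    show "0 \<in> im_down V f p" unfolding im_down_def
    proof
      fix q assume "q \<in> {q. q \<le> snd p}"
      then have "f (fst p, q) p 0 = 0" using f0[OF pm pl2] by simp
      then show "0 \<in> f (fst p, q) p ` V (fst p, q)" using V0[OF pm] by (metis image_eqI)
    qed
    have "f p (fst p, snd p) 0 = 0" using f0[OF pm, of p "(fst p, snd p)"] by (simp add: pleq_def)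
    then show "0 \<in> ker_up V f p" unfolding ker_up_def using V0[OF pm, of p] by auto
  qed
  have fin: ?thesis if eV: "\<forall>q. e q \<in> V q" and ec: "\<forall>p q. pleq p q \<longrightarrow> f p q (e p) = e q"
    and ne: "e p0 \<noteq> 0" and dS: "down_closed JS" and dT: "down_closed JT"
    and supp: "{q. e q \<noteq> 0} = JS \<times> JT" for e p0 JS JT
  proof -
    have supc: "e (max (fst q) (fst r), max (snd q) (snd r)) \<noteq> 0" if "e q \<noteq> 0" "e r \<noteq> 0" for q r
    proof -
      have "q \<in> JS \<times> JT" "r \<in> JS \<times> JT" using that supp by blast+
      then have "max (fst q) (fst r) \<in> JS" "max (snd q) (snd r) \<in> JT"
        by (auto simp: max_def)
      then have "(max (fst q) (fst r), max (snd q) (snd r)) \<in> {q. e q \<noteq> 0}" using supp by simp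
      then show ?thesis by simp
    qed
    have Vs: "V q = N1 sc e q" for q
      by (rule decomp_span[OF pm assms(3), of e p0]) (use eV ec ne supc in auto)
    show ?thesis
      by (rule final_iso[OF pm, of e JS JT]) (use eV ec Vs supp dS dT in auto)
  qed
  have dU: "down_closed (UNIV :: 's set)" "down_closed (UNIV :: 't set)"
    by (auto simp: down_closed_def)
  from assms(5) show ?thesis
  proof
    assume "\<exists>p. im_left V f p \<inter> ker_right V f p \<noteq> {0}"
    then obtain p where "im_left V f p \<inter> ker_right V f p \<noteq> {0}" by blast
    then obtain v where v: "v \<in> im_left V f p" "v \<in> ker_right V f p" "v \<noteq> 0" using z1[of p] by blast
    obtain e JS where e: "\<forall>q. e q \<in> V q" "\<forall>p q. pleq p q \<longrightarrow> f p q (e p) = e q" "e p \<noteq> 0"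
      "down_closed JS" "{q. e q \<noteq> 0} = JS \<times> UNIV"
      using case1[OF pm assms(2) assms(4) v] by blast
    show ?thesis by (rule fin[OF e(1-4) dU(2) e(5)])
  next
    assume "\<exists>p. im_down V f p \<inter> ker_up V f p \<noteq> {0}"
    then obtain p where "im_down V f p \<inter> ker_up V f p \<noteq> {0}" by blast
    then obtain v where v: "v \<in> im_down V f p" "v \<in> ker_up V f p" "v \<noteq> 0" using z2[of p] by blast
    obtain e JT where e: "\<forall>q. e q \<in> V q" "\<forall>p q. pleq p q \<longrightarrow> f p q (e p) = e q" "e p \<noteq> 0"
      "down_closed JT" "{q. e q \<noteq> 0} = UNIV \<times> JT"
      using case2[OF pm assms(2) assms(4) v] by blast
    show ?thesis by (rule fin[OF e(1-3) dU(1) e(4) e(5)])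
  qed
qed


end
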